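(* Let $f$ be a pre-subgroup of $V$ and $G_f=\{x\in S: xe\in H_f\}$. Then $$G_f=\{L(\omega_{\xi,f})^*:\xi\in\mathcal H\}=\{x\in S: x\rho_f=\rho_fx\}=\{x\in S:\delta(x)(1\otimes L_f)=x\otimes L_f\},$$ and $G_f$ is a $*$-stable left coideal subalgebra of $S$, i.e. a unital $*$-subalgebra with $\delta(G_f)\subset S\otimes G_f$.
   Context: Let $\mathcal H$ be a finite-dimensional Hilbert space (inner products linear in the second variable) and $V$ a multiplicative unitary on $\mathcal H$ ($V_{12}V_{13}V_{23}=V_{23}V_{12}$) of multiplicity 1 (one-dimensional space of fixed vectors $\xi$, i.e. $V(\xi\otimes\eta)=\xi\otimes\eta$ for all $\eta$). Fix a unit fixed vector $e$. $\omega_{\xi,\eta}(T)=\langle\xi,T\eta\rangle$; $L(\omega)=(\omega\otimes\mathrm{id})(V)$, $\rho(\omega)=(\mathrm{id}\otimes\omega)(V)$; $S=\{L(\omega):\omega\in\mathcal L(\mathcal H)^*\}$; $\delta(x)=V(x\otimes1)V^*$ for $x\in S$ (so $\delta(S)\subset S\otimes S$). A pre-subgroup is $f\in\mathcal H$ with $\|f\|=1$, $\langle f,e\rangle>0$, $V(f\otimes f)=f\otimes f$; $L_f=L(\omega_{f,f})$, $\rho_f=\rho(\omega_{f,f})$; $H_f=\{\eta:V(\eta\otimes f)=\eta\otimes f\}$. *)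

theory Defs
  imports Complex_Main
begin

text \<open>Finite-dimensional Hilbert space H modelled as l2 of a finite index type 'i
  (vectors 'i => complex, standard inner product, conjugate-linear in the first
  variable).\<close>

type_synonym 'i vec = "'i \<Rightarrow> complex"
type_synonym 'i op = "'i \<Rightarrow> 'i \<Rightarrow> complex"

definition inner_v :: "'i::finite vec \<Rightarrow> 'i vec \<Rightarrow> complex" where
  "inner_v x y = (\<Sum>i\<in>UNIV. cnj (x i) * y i)"

definition app :: "'i::finite op \<Rightarrow> 'i vec \<Rightarrow> 'i vec" where
  "app A x = (\<lambda>i. \<Sum>j\<in>UNIV. A i j * x j)"

definition comp_op :: "'i::finite op \<Rightarrow> 'i op \<Rightarrow> 'i op" where
  "comp_op A B = (\<lambda>i k. \<Sum>j\<in>UNIV. A i j * B j k)"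

definition adj :: "'i op \<Rightarrow> 'i op" where
  "adj A = (\<lambda>i j. cnj (A j i))"

definition id_op :: "'i op" where
  "id_op = (\<lambda>i j. if i = j then 1 else 0)"

definition unitary_op :: "'i::finite op \<Rightarrow> bool" where
  "unitary_op U \<longleftrightarrow> comp_op (adj U) U = id_op \<and> comp_op U (adj U) = id_op"

definition tensor_v :: "'i vec \<Rightarrow> 'j vec \<Rightarrow> ('i \<times> 'j) vec" where
  "tensor_v x y = (\<lambda>(i, j). x i * y j)"

definition tensor_op :: "'i op \<Rightarrow> 'j op \<Rightarrow> ('i \<times> 'j) op" where
  "tensor_op A B = (\<lambda>(i, j) (k, l). A i k * B j l)"

definition leg12 :: "('i \<times> 'i) op \<Rightarrow> ('i \<times> 'i \<times> 'i) op" where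
  "leg12 V = (\<lambda>(i, j, k) (i', j', k'). V (i, j) (i', j') * (if k = k' then 1 else 0))"

definition leg13 :: "('i \<times> 'i) op \<Rightarrow> ('i \<times> 'i \<times> 'i) op" where
  "leg13 V = (\<lambda>(i, j, k) (i', j', k'). V (i, k) (i', k') * (if j = j' then 1 else 0))"

definition leg23 :: "('i \<times> 'i) op \<Rightarrow> ('i \<times> 'i \<times> 'i) op" where
  "leg23 V = (\<lambda>(i, j, k) (i', j', k'). (if i = i' then 1 else 0) * V (j, k) (j', k'))"

definition multiplicative_unitary :: "('i::finite \<times> 'i) op \<Rightarrow> bool" where
  "multiplicative_unitary V \<longleftrightarrow> unitary_op V \<and>
     comp_op (comp_op (leg12 V) (leg13 V)) (leg23 V) = comp_op (leg23 V) (leg12 V)"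

definition lin_functional :: "('i op \<Rightarrow> complex) \<Rightarrow> bool" where
  "lin_functional \<omega> \<longleftrightarrow>
     (\<forall>A B. \<omega> (\<lambda>i j. A i j + B i j) = \<omega> A + \<omega> B) \<and>
     (\<forall>c A. \<omega> (\<lambda>i j. c * A i j) = c * \<omega> A)"

definition omega :: "'i::finite vec \<Rightarrow> 'i vec \<Rightarrow> 'i op \<Rightarrow> complex" where
  "omega \<xi> \<eta> T = inner_v \<xi> (app T \<eta>)"

text \<open>Slice maps: L(w) = (w (x) id)(V), rho(w) = (id (x) w)(V).\<close>
definition Lmap :: "('i \<times> 'i) op \<Rightarrow> ('i op \<Rightarrow> complex) \<Rightarrow> 'i op" where
  "Lmap V \<omega> = (\<lambda>j l. \<omega> (\<lambda>i k. V (i, j) (k, l)))"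

definition rhomap :: "('i \<times> 'i) op \<Rightarrow> ('i op \<Rightarrow> complex) \<Rightarrow> 'i op" where
  "rhomap V \<omega> = (\<lambda>i k. \<omega> (\<lambda>j l. V (i, j) (k, l)))"

definition Salg :: "('i \<times> 'i) op \<Rightarrow> 'i op set" where
  "Salg V = {Lmap V \<omega> | \<omega>. lin_functional \<omega>}"

definition delta :: "('i::finite \<times> 'i) op \<Rightarrow> 'i op \<Rightarrow> ('i \<times> 'i) op" where
  "delta V x = comp_op (comp_op V (tensor_op x id_op)) (adj V)"

definition fixed_vec :: "('i::finite \<times> 'i) op \<Rightarrow> 'i vec \<Rightarrow> bool" where
  "fixed_vec V \<xi> \<longleftrightarrow> (\<forall>\<eta>. app V (tensor_v \<xi> \<eta>) = tensor_v \<xi> \<eta>)"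

definition pre_subgroup :: "('i::finite \<times> 'i) op \<Rightarrow> 'i vec \<Rightarrow> 'i vec \<Rightarrow> bool" where
  "pre_subgroup V e f \<longleftrightarrow> inner_v f f = 1 \<and> inner_v f e \<in> \<real> \<and> Re (inner_v f e) > 0 \<and>
     app V (tensor_v f f) = tensor_v f f"

definition L_f :: "('i::finite \<times> 'i) op \<Rightarrow> 'i vec \<Rightarrow> 'i op" where
  "L_f V f = Lmap V (omega f f)"

definition rho_f :: "('i::finite \<times> 'i) op \<Rightarrow> 'i vec \<Rightarrow> 'i op" where
  "rho_f V f = rhomap V (omega f f)"

definition H_f :: "('i::finite \<times> 'i) op \<Rightarrow> 'i vec \<Rightarrow> 'i vec set" where
  "H_f V f = {\<eta>. app V (tensor_v \<eta> f) = tensor_v \<eta> f}"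

definition G_f :: "('i::finite \<times> 'i) op \<Rightarrow> 'i vec \<Rightarrow> 'i vec \<Rightarrow> 'i op set" where
  "G_f V e f = {x \<in> Salg V. app x e \<in> H_f V f}"

definition alg_tensor :: "'i op set \<Rightarrow> 'j op set \<Rightarrow> ('i \<times> 'j) op set" where
  "alg_tensor A B = {T. \<exists>(n::nat) c a b. (\<forall>k<n. a k \<in> A \<and> b k \<in> B) \<and>
      T = (\<lambda>p q. \<Sum>k<n. c k * tensor_op (a k) (b k) p q)}"

definition star_subalgebra :: "'i::finite op set \<Rightarrow> bool" where
  "star_subalgebra G \<longleftrightarrow> id_op \<in> G \<and>
     (\<forall>x\<in>G. \<forall>y\<in>G. (\<lambda>i j. x i j + y i j) \<in> G) \<and>
     (\<forall>c. \<forall>x\<in>G. (\<lambda>i j. c * x i j) \<in> G) \<and>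
     (\<forall>x\<in>G. \<forall>y\<in>G. comp_op x y \<in> G) \<and>
     (\<forall>x\<in>G. adj x \<in> G)"

end

theory Submission
  imports Defs
begin

definition bv :: "'i \<Rightarrow> 'i vec" where "bv i = (\<lambda>j. if j = i then 1 else 0)"

lemma sum_delta1: "(\<Sum>j\<in>(UNIV::'a::finite set). (if i = j then (1::complex) else 0) * g j) = g i"
proof -
  have "(\<Sum>j\<in>(UNIV::'a set). (if i = j then (1::complex) else 0) * g j) = (\<Sum>j\<in>UNIV. if i = j then g j else 0)"
    by (rule sum.cong) auto
  then show ?thesis by simp
qed

lemma sum_delta2: "(\<Sum>j\<in>(UNIV::'a::finite set). (if j = i then (1::complex) else 0) * g j) = g i"
proof -
  have "(\<Sum>j\<in>(UNIV::'a set). (if j = i then (1::complex) else 0) * g j) = (\<Sum>j\<in>UNIV. if i = j then g j else 0)"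
    by (rule sum.cong) auto
  then show ?thesis by simp
qed

lemma sum_delta3: "(\<Sum>j\<in>(UNIV::'a::finite set). g j * (if j = i then (1::complex) else 0)) = g i"
proof -
  have "(\<Sum>j\<in>(UNIV::'a set). g j * (if j = i then (1::complex) else 0)) = (\<Sum>j\<in>UNIV. if i = j then g j else 0)"
    by (rule sum.cong) auto
  then show ?thesis by simp
qed

lemma sum_delta4: "(\<Sum>j\<in>(UNIV::'a::finite set). g j * (if i = j then (1::complex) else 0)) = g i"
proof -
  have "(\<Sum>j\<in>(UNIV::'a set). g j * (if i = j then (1::complex) else 0)) = (\<Sum>j\<in>UNIV. if i = j then g j else 0)"
    by (rule sum.cong) auto
  then show ?thesis by simp
qed

lemma app_bv: "app A (bv k) = (\<lambda>i. A i k)"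
  by (simp add: app_def bv_def sum_delta3)

lemma inner_bv: "inner_v (bv i) x = x i"
proof -
  have "(\<Sum>ia\<in>UNIV. cnj (bv i ia) * x ia) = (\<Sum>ia\<in>UNIV. (if ia = i then 1 else 0) * x ia)"
    by (rule sum.cong) (auto simp: bv_def)
  then show ?thesis by (simp add: inner_v_def sum_delta2)
qed

lemma inner_bv_r: "inner_v x (bv i) = cnj (x i)"
  by (simp add: inner_v_def bv_def sum_delta3)

lemma vec_eq_inner: "(\<And>a. inner_v a x = inner_v a y) \<Longrightarrow> x = y"
proof
  fix i assume "\<And>a. inner_v a x = inner_v a y"
  from this[of "bv i"] show "x i = y i" by (simp add: inner_bv)
qed

lemma app_comp: "app (comp_op A B) x = app A (app B x)"
  unfolding app_def comp_op_def
  apply (rule ext)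
  apply (simp add: sum_distrib_left sum_distrib_right mult.assoc)
  apply (rule sum.swap)
  done

lemma comp_assoc: "comp_op (comp_op A B) C = comp_op A (comp_op B C)"
  unfolding comp_op_def
  apply (rule ext, rule ext)
  apply (simp add: sum_distrib_left sum_distrib_right mult.assoc)
  apply (rule sum.swap)
  done

lemma op_eq_app: "(\<And>x. app A x = app B x) \<Longrightarrow> A = B"
proof (rule ext, rule ext)
  fix i k assume "\<And>x. app A x = app B x"
  from fun_cong[OF this[of "bv k"], of i] show "A i k = B i k" by (simp add: app_bv)
qed

lemma adj_adj[simp]: "adj (adj A) = A"
  by (simp add: adj_def)

lemma inner_adj: "inner_v x (app A y) = inner_v (app (adj A) x) y"
  unfolding inner_v_def app_def adj_def
  apply (simp add: sum_distrib_left sum_distrib_right mult.assoc mult.left_commute)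
  apply (rule sum.swap)
  done

lemma inner_adj2: "inner_v (app A x) y = inner_v x (app (adj A) y)"
  by (metis inner_adj adj_adj)

lemma adj_comp: "adj (comp_op A B) = comp_op (adj B) (adj A)"
  unfolding adj_def comp_op_def by (rule ext, rule ext) (simp add: mult.commute)

lemma adj_id[simp]: "adj id_op = id_op"
  by (auto simp: adj_def id_op_def intro!: ext)

lemma app_id[simp]: "app id_op x = x"
  by (simp add: app_def id_op_def sum_delta1)

lemma comp_id_l[simp]: "comp_op id_op A = A"
  by (simp add: comp_op_def id_op_def sum_delta1)

lemma comp_id_r[simp]: "comp_op A id_op = A"
  by (simp add: comp_op_def id_op_def sum_delta3)

lemma app_add: "app A (\<lambda>i. x i + y i) = (\<lambda>i. app A x i + app A y i)"
  by (simp add: app_def distrib_left sum.distrib)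

lemma app_scale: "app A (\<lambda>i. c * x i) = (\<lambda>i. c * app A x i)"
  by (simp add: app_def sum_distrib_left mult.left_commute)

lemma app_zero: "app A (\<lambda>i. 0) = (\<lambda>i. 0)"
  by (simp add: app_def)

lemma inner_add_r: "inner_v x (\<lambda>i. y i + z i) = inner_v x y + inner_v x z"
  by (simp add: inner_v_def distrib_left sum.distrib)

lemma inner_add_l: "inner_v (\<lambda>i. y i + z i) x = inner_v y x + inner_v z x"
  by (simp add: inner_v_def distrib_right sum.distrib)

lemma inner_scale_r: "inner_v x (\<lambda>i. c * y i) = c * inner_v x y"
  by (simp add: inner_v_def sum_distrib_left mult.left_commute)

lemma inner_scale_l: "inner_v (\<lambda>i. c * y i) x = cnj c * inner_v y x"
  by (simp add: inner_v_def sum_distrib_left mult.assoc)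

lemma inner_diff_r: "inner_v x (\<lambda>i. y i - z i) = inner_v x y - inner_v x z"
  by (simp add: inner_v_def right_diff_distrib sum_subtractf)

lemma inner_diff_l: "inner_v (\<lambda>i. y i - z i) x = inner_v y x - inner_v z x"
  by (simp add: inner_v_def left_diff_distrib sum_subtractf)

lemma inner_cnj: "cnj (inner_v x y) = inner_v y x"
  by (simp add: inner_v_def mult.commute)

lemma inner_self: "inner_v x x = complex_of_real (\<Sum>i\<in>UNIV. (cmod (x i))\<^sup>2)"
proof -
  have "\<And>i. cnj (x i) * x i = complex_of_real ((cmod (x i))\<^sup>2)"
    by (subst complex_norm_square) (simp add: mult.commute)
  then show ?thesis unfolding inner_v_def of_real_sum by simp
qed

lemma inner_self_real: "Im (inner_v x x) = 0" "Re (inner_v x x) \<ge> 0"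
  by (simp_all add: inner_self sum_nonneg)

lemma inner_self_eq_0: "inner_v x x = 0 \<Longrightarrow> x = (\<lambda>i. 0)"
proof
  fix i assume "inner_v x x = 0"
  then have "(\<Sum>i\<in>UNIV. (cmod (x i))\<^sup>2) = 0" unfolding inner_self of_real_eq_0_iff .
  then have "\<forall>i\<in>UNIV. (cmod (x i))\<^sup>2 = 0" by (subst (asm) sum_nonneg_eq_0_iff) auto
  then show "x i = 0" by simp
qed


lemma sum_pair: "(\<Sum>p\<in>(UNIV::('a::finite \<times> 'b::finite) set). g p) = (\<Sum>a\<in>UNIV. \<Sum>b\<in>UNIV. g (a,b))"
  by (subst sum.cartesian_product) simp

lemma sum_triple: "(\<Sum>p\<in>(UNIV::('a::finite \<times> 'b::finite \<times> 'c::finite) set). g p) = (\<Sum>a\<in>UNIV. \<Sum>b\<in>UNIV. \<Sum>c\<in>UNIV. g (a,b,c))"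
  by (simp only: sum_pair)

lemma fun_diff0: "(\<lambda>i. a i - b i) = (\<lambda>i. 0::complex) \<Longrightarrow> a = b"
proof (rule ext)
  fix i assume "(\<lambda>i. a i - b i) = (\<lambda>i. 0::complex)"
  from fun_cong[OF this, of i] show "a i = b i" by simp
qed

lemma unitary_app1: "unitary_op U \<Longrightarrow> app (adj U) (app U x) = x"
proof -
  assume "unitary_op U"
  then have "comp_op (adj U) U = id_op" by (simp add: unitary_op_def)
  then show ?thesis by (metis app_comp app_id)
qed

lemma unitary_app2: "unitary_op U \<Longrightarrow> app U (app (adj U) x) = x"
proof -
  assume "unitary_op U"
  then have "comp_op U (adj U) = id_op" by (simp add: unitary_op_def)
  then show ?thesis by (metis app_comp app_id)
qed

lemma unitary_inner: "unitary_op U \<Longrightarrow> inner_v (app U x) (app U y) = inner_v x y"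
  by (simp add: inner_adj2 unitary_app1)

lemma unitary_adj: "unitary_op U \<Longrightarrow> unitary_op (adj U)"
  unfolding unitary_op_def adj_adj by (rule conjI) simp_all

lemma unitary_fix_adj: "unitary_op U \<Longrightarrow> app U v = v \<Longrightarrow> app (adj U) v = v"
  using unitary_app1[of U v] by simp

lemma unitary_dist: 
  assumes "unitary_op U"
  shows "inner_v (\<lambda>i. app U v i - v i) (\<lambda>i. app U v i - v i)
     = 2 * inner_v v v - inner_v v (app U v) - cnj (inner_v v (app U v))"
proof -
  have "inner_v (\<lambda>i. app U v i - v i) (\<lambda>i. app U v i - v i)
     = inner_v (app U v) (app U v) - inner_v v (app U v) - inner_v (app U v) v + inner_v v v"
    by (simp add: inner_diff_l inner_diff_r)
  also have "\<dots> = 2 * inner_v v v - inner_v v (app U v) - cnj (inner_v v (app U v))"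
    using unitary_inner[OF assms] by (simp add: inner_cnj)
  finally show ?thesis .
qed

lemma unitary_CS:
  assumes "unitary_op U" "inner_v v (app U v) = inner_v v v"
  shows "app U v = v"
proof -
  have "cnj (inner_v v v) = inner_v v v" by (simp add: inner_cnj)
  then have "inner_v (\<lambda>i. app U v i - v i) (\<lambda>i. app U v i - v i) = 0"
    using unitary_dist[OF assms(1), of v] assms(2) by simp
  then have "(\<lambda>i. app U v i - v i) = (\<lambda>i. 0)" by (rule inner_self_eq_0)
  then show ?thesis by (rule fun_diff0)
qed

lemma unitary_CS_sum:
  assumes U: "unitary_op U" and fin: "finite I"
    and eq: "(\<Sum>i\<in>I. inner_v (v i) (app U (v i))) = (\<Sum>i\<in>I. inner_v (v i) (v i))"
  shows "\<forall>i\<in>I. app U (v i) = v i"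
proof -
  define d where "d i = inner_v (\<lambda>j. app U (v i) j - v i j) (\<lambda>j. app U (v i) j - v i j)" for i
  have d: "d i = 2 * inner_v (v i) (v i) - inner_v (v i) (app U (v i)) - cnj (inner_v (v i) (app U (v i)))" for i
    unfolding d_def by (rule unitary_dist[OF U])
  have "(\<Sum>i\<in>I. d i) = 2 * (\<Sum>i\<in>I. inner_v (v i) (v i)) - (\<Sum>i\<in>I. inner_v (v i) (app U (v i)))
      - cnj (\<Sum>i\<in>I. inner_v (v i) (app U (v i)))"
    by (simp add: d sum_subtractf sum_distrib_left)
  also have "\<dots> = 2 * (\<Sum>i\<in>I. inner_v (v i) (v i)) - (\<Sum>i\<in>I. inner_v (v i) (v i))
      - cnj (\<Sum>i\<in>I. inner_v (v i) (v i))" by (simp only: eq)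
  also have "cnj (\<Sum>i\<in>I. inner_v (v i) (v i)) = (\<Sum>i\<in>I. inner_v (v i) (v i))"
    by (simp add: inner_cnj)
  finally have s0: "(\<Sum>i\<in>I. d i) = 0" by simp
  have re: "Re (d i) \<ge> 0" for i unfolding d_def by (rule inner_self_real)
  have im: "Im (d i) = 0" for i unfolding d_def by (rule inner_self_real)
  have "(\<Sum>i\<in>I. Re (d i)) = Re (\<Sum>i\<in>I. d i)" by (simp add: Re_sum)
  then have "(\<Sum>i\<in>I. Re (d i)) = 0" using s0 by simp
  then have "\<forall>i\<in>I. Re (d i) = 0" using fin re by (subst (asm) sum_nonneg_eq_0_iff) auto
  then have "\<forall>i\<in>I. d i = 0" using im by (simp add: complex_eq_iff)
  then show ?thesis unfolding d_def using inner_self_eq_0 fun_diff0 by blast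
qed

lemma app_tensor: "app (tensor_op A B) (tensor_v x y) = tensor_v (app A x) (app B y)"
  unfolding app_def tensor_op_def tensor_v_def
  apply (rule ext)
  apply (auto simp: sum_pair sum_distrib_left sum_distrib_right mult_ac)
  apply (rule sum.swap)
  done

lemma inner_tensor: "inner_v (tensor_v a b) (tensor_v c d) = inner_v a c * inner_v b d"
  unfolding inner_v_def tensor_v_def
  apply (auto simp: sum_pair sum_distrib_left sum_distrib_right mult_ac)
  apply (rule sum.swap)
  done

lemma tensor_bv: "tensor_v (bv i) (bv j) = bv (i,j)"
  by (auto simp: tensor_v_def bv_def intro!: ext)

lemma op_eq_tensor:
  fixes A B :: "('a::finite \<times> 'b::finite) op"
  assumes "\<And>a b. app A (tensor_v a b) = app B (tensor_v a b)"
  shows "A = B"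
proof (rule ext, rule ext)
  fix p q :: "'a \<times> 'b"
  obtain i j where q: "q = (i,j)" by fastforce
  from fun_cong[OF assms[of "bv i" "bv j"], of p] show "A p q = B p q"
    by (simp add: tensor_bv app_bv q)
qed

lemma vec_eq_tensor:
  fixes x y :: "('a::finite \<times> 'b::finite) vec"
  assumes "\<And>a b. inner_v (tensor_v a b) x = inner_v (tensor_v a b) y"
  shows "x = y"
proof
  fix q :: "'a \<times> 'b"
  obtain i j where q: "q = (i,j)" by fastforce
  from assms[of "bv i" "bv j"] show "x q = y q"
    by (simp add: tensor_bv inner_bv q)
qed


lemma if1_mult_l[simp]: "(if P then (1::complex) else 0) * a = (if P then a else 0)" by simp
lemma if1_mult_r[simp]: "a * (if P then (1::complex) else 0) = (if P then a else 0)" by simp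
lemma if0_mult_l[simp]: "(if P then a else (0::complex)) * b = (if P then a * b else 0)" by simp
lemma if0_mult_r[simp]: "b * (if P then a else (0::complex)) = (if P then b * a else 0)" by simp

lemma sum_if_out[simp]: "(\<Sum>x\<in>A. if P then f x else (0::complex)) = (if P then (\<Sum>x\<in>A. f x) else 0)"
  by simp

definition t21 :: "('i \<times> 'i) vec \<Rightarrow> 'i vec \<Rightarrow> ('i \<times> 'i \<times> 'i) vec" where
  "t21 w z = (\<lambda>(i,j,k). w (i,j) * z k)"
definition t13 :: "('i \<times> 'i) vec \<Rightarrow> 'i vec \<Rightarrow> ('i \<times> 'i \<times> 'i) vec" where
  "t13 w y = (\<lambda>(i,j,k). w (i,k) * y j)"

lemma t3_21: "tensor_v x (tensor_v y z) = t21 (tensor_v x y) z"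
  by (auto simp: t21_def tensor_v_def intro!: ext)

lemma t3_13: "tensor_v x (tensor_v y z) = t13 (tensor_v x z) y"
  by (auto simp: t13_def tensor_v_def intro!: ext)

lemma app_leg12: "app (leg12 A) (t21 w z) = t21 (app A w) z"
  unfolding app_def leg12_def t21_def
  by (rule ext) (auto simp: sum_triple sum_pair sum_distrib_right mult.assoc)

lemma app_leg13: "app (leg13 A) (t13 w y) = t13 (app A w) y"
  unfolding app_def leg13_def t13_def
  by (rule ext) (auto simp: sum_triple sum_pair sum_distrib_right mult.assoc)

lemma app_leg23: "app (leg23 A) (tensor_v x w) = tensor_v x (app A w)"
  unfolding app_def leg23_def tensor_v_def
  by (rule ext) (auto simp: sum_triple sum_pair sum_distrib_left mult.left_commute)

lemma inner_t21: "inner_v (t21 w z) (t21 w' z') = inner_v w w' * inner_v z z'"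
  unfolding inner_v_def t21_def
  by (simp add: sum_triple sum_pair sum_distrib_left sum_distrib_right mult_ac)

lemma inner_t13: "inner_v (t13 w y) (t13 w' y') = inner_v w w' * inner_v y y'"
  unfolding inner_v_def t13_def
  apply (simp add: sum_triple sum_pair sum_distrib_left sum_distrib_right mult_ac)
  apply (rule sum.cong[OF refl])
  apply (rule sum.swap)
  done

lemma adj_leg12: "adj (leg12 A) = leg12 (adj A)"
  by (auto simp: adj_def leg12_def intro!: ext)
lemma adj_leg13: "adj (leg13 A) = leg13 (adj A)"
  by (auto simp: adj_def leg13_def intro!: ext)
lemma adj_leg23: "adj (leg23 A) = leg23 (adj A)"
  by (auto simp: adj_def leg23_def intro!: ext)

lemma comp_leg12: "comp_op (leg12 A) (leg12 B) = leg12 (comp_op A B)"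
  unfolding comp_op_def leg12_def
  by (auto simp: sum_triple sum_pair sum_distrib_right intro!: ext)

lemma comp_leg13: "comp_op (leg13 A) (leg13 B) = leg13 (comp_op A B)"
  unfolding comp_op_def leg13_def
  by (auto simp: sum_triple sum_pair sum_distrib_right intro!: ext)

lemma comp_leg23: "comp_op (leg23 A) (leg23 B) = leg23 (comp_op A B)"
  unfolding comp_op_def leg23_def
  by (auto simp: sum_triple sum_pair sum_distrib_left intro!: ext)

lemma id_leg12: "leg12 id_op = id_op"
  by (auto simp: leg12_def id_op_def intro!: ext)
lemma id_leg13: "leg13 id_op = id_op"
  by (auto simp: leg13_def id_op_def intro!: ext)
lemma id_leg23: "leg23 id_op = id_op"
  by (auto simp: leg23_def id_op_def intro!: ext)

lemma unitary_leg12: "unitary_op V \<Longrightarrow> unitary_op (leg12 V)"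
  by (simp add: unitary_op_def adj_leg12 comp_leg12 id_leg12)
lemma unitary_leg13: "unitary_op V \<Longrightarrow> unitary_op (leg13 V)"
  by (simp add: unitary_op_def adj_leg13 comp_leg13 id_leg13)
lemma unitary_leg23: "unitary_op V \<Longrightarrow> unitary_op (leg23 V)"
  by (simp add: unitary_op_def adj_leg23 comp_leg23 id_leg23)


lemma sum3_rot: "(\<Sum>a\<in>A. \<Sum>b\<in>B. \<Sum>c\<in>C. f a b c) = (\<Sum>b\<in>B. \<Sum>c\<in>C. \<Sum>a\<in>A. f a b c)"
proof -
  have "(\<Sum>a\<in>A. \<Sum>b\<in>B. \<Sum>c\<in>C. f a b c) = (\<Sum>b\<in>B. \<Sum>a\<in>A. \<Sum>c\<in>C. f a b c)"
    by (rule sum.swap)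
  also have "\<dots> = (\<Sum>b\<in>B. \<Sum>c\<in>C. \<Sum>a\<in>A. f a b c)"
    by (rule sum.cong[OF refl], rule sum.swap)
  finally show ?thesis .
qed

definition sl1 :: "'i vec \<Rightarrow> ('i \<times> 'i) vec \<Rightarrow> 'i vec" where
  "sl1 a U = (\<lambda>j. \<Sum>i\<in>UNIV. cnj (a i) * U (i,j))"
definition sl2 :: "'i vec \<Rightarrow> ('i \<times> 'i) vec \<Rightarrow> 'i vec" where
  "sl2 a U = (\<lambda>i. \<Sum>j\<in>UNIV. cnj (a j) * U (i,j))"

lemma inner_sl1: "inner_v x (sl1 a U) = inner_v (tensor_v a x) (U::('i::finite\<times>'i) vec)"
  unfolding inner_v_def sl1_def tensor_v_def
  apply (simp add: sum_pair sum_distrib_left mult_ac)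
  apply (rule sum.swap)
  done

lemma inner_sl2: "inner_v x (sl2 a U) = inner_v (tensor_v x a) (U::('i::finite\<times>'i) vec)"
  unfolding inner_v_def sl2_def tensor_v_def
  by (simp add: sum_pair sum_distrib_left mult_ac)

lemma app_Lmap: "app (Lmap V (omega a b)) x = sl1 a (app V (tensor_v b x))"
  unfolding app_def Lmap_def omega_def inner_v_def sl1_def tensor_v_def
  apply (rule ext)
  apply (simp add: sum_pair sum_distrib_left sum_distrib_right mult_ac)
  apply (rule sum3_rot)
  done

lemma app_rhomap: "app (rhomap V (omega a b)) x = sl2 a (app V (tensor_v x b))"
  unfolding app_def rhomap_def omega_def inner_v_def sl2_def tensor_v_def
  apply (rule ext)
  apply (simp add: sum_pair sum_distrib_left sum_distrib_right mult_ac)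
  apply (rule sum.swap)
  done

lemma inner_Lmap: "inner_v y (app (Lmap V (omega a b)) x) = inner_v (tensor_v a y) (app V (tensor_v b x))"
  by (simp add: app_Lmap inner_sl1)

lemma inner_rhomap: "inner_v y (app (rhomap V (omega a b)) x) = inner_v (tensor_v y a) (app V (tensor_v x b))"
  by (simp add: app_rhomap inner_sl2)

lemma app_opadd: "app (\<lambda>i j. A i j + B i j) x = (\<lambda>i. app A x i + app B x i)"
  by (simp add: app_def distrib_right sum.distrib)

lemma app_opscale: "app (\<lambda>i j. c * A i j) x = (\<lambda>i. c * app A x i)"
  by (simp add: app_def sum_distrib_left mult.assoc)

lemma lin_omega: "lin_functional (omega a b)"
  unfolding lin_functional_def omega_def
  by (simp add: app_opadd app_opscale inner_add_r inner_scale_r)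

definition trf :: "'i op \<Rightarrow> complex" where "trf T = (\<Sum>i\<in>UNIV. T i i)"

lemma lin_trf: "lin_functional (trf :: ('i::finite) op \<Rightarrow> complex)"
  unfolding lin_functional_def trf_def by (simp add: sum.distrib sum_distrib_left)

definition E_op :: "'i \<Rightarrow> 'i \<Rightarrow> 'i op" where "E_op i k = (\<lambda>a b. if a = i then (if b = k then 1 else 0) else 0)"

lemma lin_sum:
  assumes "lin_functional w" "finite A"
  shows "w (\<lambda>a b. \<Sum>x\<in>A. g x a b) = (\<Sum>x\<in>A. w (g x))"
  using assms(2)
proof (induction A rule: finite_induct)
  case empty
  have l: "\<And>c A. w (\<lambda>i j. c * A i j) = c * w A" using assms(1) unfolding lin_functional_def by blast
  have "w (\<lambda>a b. 0) = 0" using l[of 0 "\<lambda>i j. 0"] by simp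
  then show ?case by simp
next
  case (insert x F)
  have "w (\<lambda>a b. \<Sum>y\<in>insert x F. g y a b) = w (\<lambda>a b. g x a b + (\<Sum>y\<in>F. g y a b))"
    using insert by simp
  also have "\<dots> = w (g x) + w (\<lambda>a b. \<Sum>y\<in>F. g y a b)"
    using assms(1) unfolding lin_functional_def by simp
  finally show ?case using insert by simp
qed

lemma lin_expand:
  fixes T :: "'i::finite op"
  assumes "lin_functional w"
  shows "w T = (\<Sum>i\<in>UNIV. \<Sum>k\<in>UNIV. T i k * w (E_op i k))"
proof -
  have T: "T = (\<lambda>a b. \<Sum>i\<in>UNIV. \<Sum>k\<in>UNIV. T i k * E_op i k a b)"
    by (auto simp: E_op_def sum_delta4 intro!: ext)
  have "w T = (\<Sum>i\<in>UNIV. w (\<lambda>a b. \<Sum>k\<in>UNIV. T i k * E_op i k a b))"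
    by (subst T) (rule lin_sum[OF assms], simp)
  also have "\<dots> = (\<Sum>i\<in>UNIV. \<Sum>k\<in>UNIV. w (\<lambda>a b. T i k * E_op i k a b))"
    by (rule sum.cong[OF refl]) (rule lin_sum[OF assms], simp)
  also have "\<dots> = (\<Sum>i\<in>UNIV. \<Sum>k\<in>UNIV. T i k * w (E_op i k))"
    using assms unfolding lin_functional_def by simp
  finally show ?thesis .
qed

lemma Lmap_expand:
  fixes V :: "('i::finite \<times> 'i) op"
  assumes "lin_functional w"
  shows "Lmap V w = (\<lambda>j l. \<Sum>i\<in>UNIV. \<Sum>k\<in>UNIV. w (E_op i k) * Lmap V (omega (bv i) (bv k)) j l)"
proof -
  have "Lmap V (omega (bv i) (bv k)) j l = V (i,j) (k,l)" for i k j l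
    by (simp add: Lmap_def omega_def inner_bv app_bv)
  then show ?thesis unfolding Lmap_def
    by (subst lin_expand[OF assms]) (simp add: mult.commute)
qed


lemma sl1_tensor: "sl1 a (tensor_v x y) = (\<lambda>j. inner_v a x * y j)"
  by (auto simp: sl1_def tensor_v_def inner_v_def sum_distrib_left sum_distrib_right mult_ac intro!: ext)

lemma sl2_tensor: "sl2 a (tensor_v x y) = (\<lambda>i. x i * inner_v a y)"
  by (auto simp: sl2_def tensor_v_def inner_v_def sum_distrib_left mult_ac intro!: ext)

lemma mix1: "inner_v (t21 U z) (t13 W y) = inner_v (sl2 y U) (sl2 z W)"
  unfolding inner_v_def t21_def t13_def sl2_def
  apply (simp add: sum_triple sum_distrib_left sum_distrib_right mult_ac)
  apply (rule sum.cong[OF refl])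
  apply (rule trans[OF sum.swap])
  apply (simp add: mult_ac)
  done

lemma mix2: "inner_v (t13 U y) (tensor_v x W) = inner_v (sl1 x U) (sl1 y W)"
proof -
  have "inner_v (t13 U y) (tensor_v x W) = (\<Sum>a\<in>UNIV. \<Sum>b\<in>UNIV. \<Sum>c\<in>UNIV. cnj (U (a,c) * y b) * (x a * W (b,c)))"
    unfolding inner_v_def t13_def tensor_v_def by (simp add: sum_triple)
  also have "\<dots> = (\<Sum>b\<in>UNIV. \<Sum>c\<in>UNIV. \<Sum>a\<in>UNIV. cnj (U (a,c) * y b) * (x a * W (b,c)))" by (rule sum3_rot)
  also have "\<dots> = (\<Sum>c\<in>UNIV. \<Sum>a\<in>UNIV. \<Sum>b\<in>UNIV. cnj (U (a,c) * y b) * (x a * W (b,c)))" by (rule sum3_rot)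
  also have "\<dots> = (\<Sum>c\<in>UNIV. \<Sum>b\<in>UNIV. \<Sum>a\<in>UNIV. cnj (U (a,c) * y b) * (x a * W (b,c)))" by (rule sum.cong[OF refl], rule sum.swap)
  also have "\<dots> = inner_v (sl1 x U) (sl1 y W)"
    unfolding inner_v_def sl1_def by (simp add: sum_distrib_left sum_distrib_right mult_ac)
  finally show ?thesis .
qed

lemma app_adj_rhomap: "app (adj (rhomap V (omega a b))) y = sl2 b (app (adj V) (tensor_v y a))"
proof (rule vec_eq_inner)
  fix x
  have "inner_v x (app (adj (rhomap V (omega a b))) y) = cnj (inner_v y (app (rhomap V (omega a b)) x))"
    by (simp add: inner_adj2[symmetric] inner_cnj)
  also have "\<dots> = cnj (inner_v (tensor_v y a) (app V (tensor_v x b)))" by (simp add: inner_rhomap)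
  also have "\<dots> = inner_v (tensor_v x b) (app (adj V) (tensor_v y a))"
    by (simp add: inner_cnj inner_adj2)
  also have "\<dots> = inner_v x (sl2 b (app (adj V) (tensor_v y a)))" by (simp add: inner_sl2)
  finally show "inner_v x (app (adj (rhomap V (omega a b))) y) = inner_v x (sl2 b (app (adj V) (tensor_v y a)))" .
qed

lemma app_adj_Lmap: "app (adj (Lmap V (omega a b))) y = sl1 b (app (adj V) (tensor_v a y))"
proof (rule vec_eq_inner)
  fix x
  have "inner_v x (app (adj (Lmap V (omega a b))) y) = cnj (inner_v y (app (Lmap V (omega a b)) x))"
    by (simp add: inner_adj2[symmetric] inner_cnj)
  also have "\<dots> = cnj (inner_v (tensor_v a y) (app V (tensor_v b x)))" by (simp add: inner_Lmap)
  also have "\<dots> = inner_v (tensor_v b x) (app (adj V) (tensor_v a y))"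
    by (simp add: inner_cnj inner_adj2)
  also have "\<dots> = inner_v x (sl1 b (app (adj V) (tensor_v a y)))" by (simp add: inner_sl1)
  finally show "inner_v x (app (adj (Lmap V (omega a b))) y) = inner_v x (sl1 b (app (adj V) (tensor_v a y)))" .
qed

lemma t13_cancel:
  assumes "t13 W m = t13 W' m" "m \<noteq> (\<lambda>i. 0)"
  shows "W = W'"
proof
  fix p :: "'a \<times> 'a"
  obtain i k where p: "p = (i,k)" by fastforce
  obtain j where j: "m j \<noteq> 0" using assms(2) by auto
  from fun_cong[OF assms(1), of "(i,j,k)"] have "W (i,k) * m j = W' (i,k) * m j"
    by (simp add: t13_def)
  then show "W p = W' p" using j p by simp
qed


locale mus =
  fixes V :: "('i::finite \<times> 'i) op" and e :: "'i vec"
  assumes mu: "multiplicative_unitary V"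
    and mult1: "\<forall>\<xi>. fixed_vec V \<xi> \<longleftrightarrow> (\<exists>c. \<xi> = (\<lambda>i. c * e i))"
    and e_unit: "inner_v e e = 1"
begin

lemma unit: "unitary_op V"
  using mu by (simp add: multiplicative_unitary_def)

lemma pent: "app (leg12 V) (app (leg13 V) (app (leg23 V) v)) = app (leg23 V) (app (leg12 V) v)"
proof -
  have "comp_op (comp_op (leg12 V) (leg13 V)) (leg23 V) = comp_op (leg23 V) (leg12 V)"
    using mu by (simp add: multiplicative_unitary_def)
  then have "app (comp_op (comp_op (leg12 V) (leg13 V)) (leg23 V)) v = app (comp_op (leg23 V) (leg12 V)) v"
    by simp
  then show ?thesis by (simp add: app_comp)
qed

lemma u12a: "app (leg12 (adj V)) (app (leg12 V) v) = v"
  using unitary_app1[OF unitary_leg12[OF unit]] by (simp add: adj_leg12)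
lemma u12b: "app (leg12 V) (app (leg12 (adj V)) v) = v"
  using unitary_app2[OF unitary_leg12[OF unit]] by (simp add: adj_leg12)
lemma u13a: "app (leg13 (adj V)) (app (leg13 V) v) = v"
  using unitary_app1[OF unitary_leg13[OF unit]] by (simp add: adj_leg13)
lemma u13b: "app (leg13 V) (app (leg13 (adj V)) v) = v"
  using unitary_app2[OF unitary_leg13[OF unit]] by (simp add: adj_leg13)
lemma u23a: "app (leg23 (adj V)) (app (leg23 V) v) = v"
  using unitary_app1[OF unitary_leg23[OF unit]] by (simp add: adj_leg23)
lemma u23b: "app (leg23 V) (app (leg23 (adj V)) v) = v"
  using unitary_app2[OF unitary_leg23[OF unit]] by (simp add: adj_leg23)
lemma ua: "app (adj V) (app V v) = v"
  using unitary_app1[OF unit] .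
lemma ub: "app V (app (adj V) v) = v"
  using unitary_app2[OF unit] .

lemma pent_ii: "app (leg12 V) (app (leg13 V) v) = app (leg23 V) (app (leg12 V) (app (leg23 (adj V)) v))"
  using pent[of "app (leg23 (adj V)) v"] by (simp add: u23b)

lemma pent_i: "app (leg13 V) (app (leg23 V) v) = app (leg12 (adj V)) (app (leg23 V) (app (leg12 V) v))"
  using arg_cong[OF pent[of v], of "app (leg12 (adj V))"] by (simp add: u12a)

lemma pent_iv: "app (leg23 V) (app (leg12 (adj V)) v) = app (leg13 (adj V)) (app (leg12 (adj V)) (app (leg23 V) v))"
proof -
  have "app (leg12 V) (app (leg13 V) (app (leg23 V) (app (leg12 (adj V)) v))) = app (leg23 V) v"
    using pent[of "app (leg12 (adj V)) v"] by (simp add: u12b)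
  then have "app (leg13 (adj V)) (app (leg12 (adj V)) (app (leg12 V) (app (leg13 V) (app (leg23 V) (app (leg12 (adj V)) v)))))
      = app (leg13 (adj V)) (app (leg12 (adj V)) (app (leg23 V) v))" by simp
  then show ?thesis by (simp add: u12a u13a)
qed

lemma inner_12: "inner_v x (app (leg12 V) y) = inner_v (app (leg12 (adj V)) x) y"
  by (simp add: inner_adj adj_leg12)
lemma inner_12a: "inner_v x (app (leg12 (adj V)) y) = inner_v (app (leg12 V) x) y"
  by (simp add: inner_adj adj_leg12)
lemma inner_13: "inner_v x (app (leg13 V) y) = inner_v (app (leg13 (adj V)) x) y"
  by (simp add: inner_adj adj_leg13)
lemma inner_13a: "inner_v x (app (leg13 (adj V)) y) = inner_v (app (leg13 V) x) y"
  by (simp add: inner_adj adj_leg13)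
lemma inner_23: "inner_v x (app (leg23 V) y) = inner_v (app (leg23 (adj V)) x) y"
  by (simp add: inner_adj adj_leg23)
lemma inner_23a: "inner_v x (app (leg23 (adj V)) y) = inner_v (app (leg23 V) x) y"
  by (simp add: inner_adj adj_leg23)

lemma e_fixed: "fixed_vec V e"
  using mult1 by (metis mult_1)

lemma e_fix: "app V (tensor_v e y) = tensor_v e y"
  using e_fixed by (simp add: fixed_vec_def)

lemma e_fix_adj: "app (adj V) (tensor_v e y) = tensor_v e y"
  by (rule unitary_fix_adj[OF unit e_fix])

lemma e_nz: "e \<noteq> (\<lambda>i. 0)"
  using e_unit by (auto simp: inner_v_def)

lemma fix_R:
  assumes "inner_v p p = 1" "app (rhomap V (omega p p)) v = v"
  shows "app V (tensor_v v p) = tensor_v v p"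
proof (rule unitary_CS[OF unit])
  have "inner_v (tensor_v v p) (app V (tensor_v v p)) = inner_v v (app (rhomap V (omega p p)) v)"
    by (simp add: inner_rhomap)
  also have "\<dots> = inner_v (tensor_v v p) (tensor_v v p)" using assms by (simp add: inner_tensor)
  finally show "inner_v (tensor_v v p) (app V (tensor_v v p)) = inner_v (tensor_v v p) (tensor_v v p)" .
qed

lemma fix_L:
  assumes "inner_v p p = 1" "app (Lmap V (omega p p)) v = v"
  shows "app V (tensor_v p v) = tensor_v p v"
proof (rule unitary_CS[OF unit])
  have "inner_v (tensor_v p v) (app V (tensor_v p v)) = inner_v v (app (Lmap V (omega p p)) v)"
    by (simp add: inner_Lmap)
  also have "\<dots> = inner_v (tensor_v p v) (tensor_v p v)" using assms by (simp add: inner_tensor)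
  finally show "inner_v (tensor_v p v) (app V (tensor_v p v)) = inner_v (tensor_v p v) (tensor_v p v)" .
qed

lemma R_of_fix:
  assumes "inner_v p p = 1" "app V (tensor_v v p) = tensor_v v p"
  shows "app (rhomap V (omega p p)) v = v"
  using assms by (simp add: app_rhomap sl2_tensor)

lemma L_of_fix:
  assumes "inner_v p p = 1" "app V (tensor_v p v) = tensor_v p v"
  shows "app (Lmap V (omega p p)) v = v"
  using assms by (simp add: app_Lmap sl1_tensor)

lemma PT:
  assumes am: "app V (tensor_v a m) = tensor_v a m" and mk: "app V (tensor_v m k) = tensor_v m k"
    and m: "m \<noteq> (\<lambda>i. 0)"
  shows "app V (tensor_v a k) = tensor_v a k"
proof -
  define v where "v = tensor_v a (tensor_v m k)"
  have v23: "app (leg23 V) v = v" unfolding v_def by (simp add: app_leg23 mk)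
  have v12: "app (leg12 V) v = v" unfolding v_def by (simp add: t3_21 app_leg12 am)
  have "app (leg12 V) (app (leg13 V) v) = v" using pent[of v] v23 v12 by simp
  then have "app (leg12 (adj V)) (app (leg12 V) (app (leg13 V) v)) = app (leg12 (adj V)) v" by simp
  then have "app (leg13 V) v = app (leg12 (adj V)) v" by (simp add: u12a)
  also have "\<dots> = v" using v12 u12a[of v] by simp
  finally have "t13 (app V (tensor_v a k)) m = t13 (tensor_v a k) m"
    unfolding v_def by (simp add: t3_13 app_leg13)
  then show ?thesis using m by (rule t13_cancel)
qed

lemma fixed_from_e:
  assumes "app V (tensor_v v e) = tensor_v v e"
  shows "\<exists>s. v = (\<lambda>i. s * e i)"
proof -
  have "fixed_vec V v" unfolding fixed_vec_def
    using PT[OF assms e_fix e_nz] by blast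
  then show ?thesis using mult1 by blast
qed

end

lemma vec_expand: "(w::'a::finite vec) = (\<lambda>x. \<Sum>q\<in>UNIV. w q * bv q x)"
proof
  fix x
  have "(\<Sum>q\<in>UNIV. w q * bv q x) = (\<Sum>q\<in>UNIV. if x = q then w q else 0)"
    by (rule sum.cong) (auto simp: bv_def)
  then show "w x = (\<Sum>q\<in>UNIV. w q * bv q x)" by simp
qed

lemma t21_sum: "t21 (\<lambda>x. \<Sum>q\<in>A. c q * g q x) a = (\<lambda>x. \<Sum>q\<in>A. c q * t21 (g q) a x)"
  by (auto simp: t21_def sum_distrib_right mult.assoc intro!: ext)

lemma tensor_sum_l: "tensor_v (\<lambda>x. \<Sum>q\<in>A. c q * g q x) a = (\<lambda>x. \<Sum>q\<in>A. c q * tensor_v (g q) a x)"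
  by (auto simp: tensor_v_def sum_distrib_right mult.assoc intro!: ext)

lemma app_sum: "app (M::'a::finite op) (\<lambda>x. \<Sum>q\<in>A. c q * g q x) = (\<lambda>x. \<Sum>q\<in>A. c q * app M (g q) x)"
  unfolding app_def
  apply (rule ext)
  apply (simp add: sum_distrib_left mult_ac)
  apply (rule sum.swap)
  done

lemma inner_sum_r: "inner_v (y::'a::finite vec) (\<lambda>x. \<Sum>q\<in>A. c q * g q x) = (\<Sum>q\<in>A. c q * inner_v y (g q))"
  unfolding inner_v_def
  apply (simp add: sum_distrib_left mult_ac)
  apply (rule sum.swap)
  done

lemma inner_sum_l: "inner_v (\<lambda>x. \<Sum>q\<in>A. c q * g q x) (y::'a::finite vec) = (\<Sum>q\<in>A. cnj (c q) * inner_v (g q) y)"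
  unfolding inner_v_def
  apply (simp add: sum_distrib_left sum_distrib_right mult_ac)
  apply (rule sum.swap)
  done

lemma trf_comm: "trf (comp_op (A::'a::finite op) B) = trf (comp_op B A)"
  unfolding trf_def comp_op_def
  apply (subst sum.swap)
  apply (simp add: mult.commute)
  done

context mus
begin

context
  fixes p :: "'i vec"
  assumes pp: "app V (tensor_v p p) = tensor_v p p" and pu: "inner_v p p = 1"
begin

lemma pp_adj: "app (adj V) (tensor_v p p) = tensor_v p p"
  by (rule unitary_fix_adj[OF unit pp])

lemma R_idem: "app (rhomap V (omega p p)) (app (rhomap V (omega p p)) b) = app (rhomap V (omega p p)) b"
proof (rule vec_eq_inner)
  fix a :: "'i vec"
  define A3 where "A3 = tensor_v a (tensor_v p p)"
  define B3 where "B3 = tensor_v b (tensor_v p p)"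
  have "inner_v a (app (rhomap V (omega p p)) (app (rhomap V (omega p p)) b))
      = inner_v (app (adj (rhomap V (omega p p))) a) (app (rhomap V (omega p p)) b)"
    by (rule inner_adj)
  also have "\<dots> = inner_v (sl2 p (app (adj V) (tensor_v a p))) (sl2 p (app V (tensor_v b p)))"
    by (simp add: app_adj_rhomap app_rhomap)
  also have "\<dots> = inner_v (t21 (app (adj V) (tensor_v a p)) p) (t13 (app V (tensor_v b p)) p)"
    by (simp add: mix1)
  also have "\<dots> = inner_v (app (leg12 (adj V)) A3) (app (leg13 V) B3)"
    unfolding A3_def B3_def by (simp only: t3_21[of a p p] t3_13[of b p p] app_leg12 app_leg13)
  also have "\<dots> = inner_v A3 (app (leg12 V) (app (leg13 V) B3))"
    by (simp add: inner_12)
  also have "\<dots> = inner_v A3 (app (leg23 V) (app (leg12 V) (app (leg23 (adj V)) B3)))"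
    by (simp add: pent_ii)
  also have "app (leg23 (adj V)) B3 = B3" unfolding B3_def by (simp add: app_leg23 pp_adj)
  also have "inner_v A3 (app (leg23 V) (app (leg12 V) B3)) = inner_v (app (leg23 (adj V)) A3) (app (leg12 V) B3)"
    by (simp add: inner_23)
  also have "app (leg23 (adj V)) A3 = A3" unfolding A3_def by (simp add: app_leg23 pp_adj)
  also have "inner_v A3 (app (leg12 V) B3) = inner_v (tensor_v a p) (app V (tensor_v b p))"
    unfolding A3_def B3_def by (simp add: t3_21 app_leg12 inner_t21 pu)
  also have "\<dots> = inner_v a (app (rhomap V (omega p p)) b)" by (simp add: inner_rhomap)
  finally show "inner_v a (app (rhomap V (omega p p)) (app (rhomap V (omega p p)) b)) = inner_v a (app (rhomap V (omega p p)) b)" .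
qed

lemma L_idem: "app (Lmap V (omega p p)) (app (Lmap V (omega p p)) b) = app (Lmap V (omega p p)) b"
proof (rule vec_eq_inner)
  fix a :: "'i vec"
  define A3 where "A3 = tensor_v p (tensor_v p a)"
  define B3 where "B3 = tensor_v p (tensor_v p b)"
  have "inner_v a (app (Lmap V (omega p p)) (app (Lmap V (omega p p)) b))
      = inner_v (app (adj (Lmap V (omega p p))) a) (app (Lmap V (omega p p)) b)"
    by (rule inner_adj)
  also have "\<dots> = inner_v (sl1 p (app (adj V) (tensor_v p a))) (sl1 p (app V (tensor_v p b)))"
    by (simp add: app_adj_Lmap app_Lmap)
  also have "\<dots> = inner_v (t13 (app (adj V) (tensor_v p a)) p) (tensor_v p (app V (tensor_v p b)))"
    by (simp add: mix2)
  also have "\<dots> = inner_v (app (leg13 (adj V)) A3) (app (leg23 V) B3)"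
    unfolding A3_def B3_def by (simp only: t3_13[of p p a] app_leg13 app_leg23)
  also have "\<dots> = inner_v A3 (app (leg13 V) (app (leg23 V) B3))"
    by (simp add: inner_13)
  also have "\<dots> = inner_v A3 (app (leg12 (adj V)) (app (leg23 V) (app (leg12 V) B3)))"
    by (simp add: pent_i)
  also have "app (leg12 V) B3 = B3" unfolding B3_def by (simp add: t3_21 app_leg12 pp)
  also have "inner_v A3 (app (leg12 (adj V)) (app (leg23 V) B3)) = inner_v (app (leg12 V) A3) (app (leg23 V) B3)"
    by (simp add: inner_12a)
  also have "app (leg12 V) A3 = A3" unfolding A3_def by (simp add: t3_21 app_leg12 pp)
  also have "inner_v A3 (app (leg23 V) B3) = inner_v (tensor_v p a) (app V (tensor_v p b))"
    unfolding A3_def B3_def by (simp add: app_leg23 inner_tensor pu)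
  also have "\<dots> = inner_v a (app (Lmap V (omega p p)) b)" by (simp add: inner_Lmap)
  finally show "inner_v a (app (Lmap V (omega p p)) (app (Lmap V (omega p p)) b)) = inner_v a (app (Lmap V (omega p p)) b)" .
qed

lemma R_range: "app V (tensor_v (app (rhomap V (omega p p)) b) p) = tensor_v (app (rhomap V (omega p p)) b) p"
  by (rule fix_R[OF pu R_idem])

lemma L_range: "app V (tensor_v p (app (Lmap V (omega p p)) b)) = tensor_v p (app (Lmap V (omega p p)) b)"
  by (rule fix_L[OF pu L_idem])

lemma R_selfadj: "adj (rhomap V (omega p p)) = rhomap V (omega p p)"
proof -
  let ?R = "rhomap V (omega p p)"
  have "app (comp_op (adj ?R) ?R) b = app ?R b" for b
  proof -
    have f: "app (adj V) (tensor_v (app ?R b) p) = tensor_v (app ?R b) p"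
      by (rule unitary_fix_adj[OF unit R_range])
    show ?thesis by (simp add: app_comp app_adj_rhomap f sl2_tensor pu)
  qed
  then have c: "comp_op (adj ?R) ?R = ?R" by (rule op_eq_app)
  then have "adj (comp_op (adj ?R) ?R) = adj ?R" by simp
  then have "comp_op (adj ?R) ?R = adj ?R" by (simp add: adj_comp)
  then show ?thesis using c by simp
qed

end

end

lemma inner_sum_r1: "inner_v (y::'a::finite vec) (\<lambda>x. \<Sum>q\<in>A. g q x) = (\<Sum>q\<in>A. inner_v y (g q))"
  using inner_sum_r[where c="\<lambda>q. 1" and y=y and A=A and g=g] by simp

lemma app_sum1: "app (M::'a::finite op) (\<lambda>x. \<Sum>q\<in>A. g q x) = (\<lambda>x. \<Sum>q\<in>A. app M (g q) x)"
  using app_sum[where c="\<lambda>q. 1" and M=M and A=A and g=g] by simp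

lemma inner_bv_bv: "inner_v (bv i) (bv i) = 1"
  unfolding inner_bv by (simp add: bv_def)

lemma PTr:
  fixes U :: "('a::finite \<times> 'a) op" and X :: "('a \<times> 'a \<times> 'a) op"
  assumes U: "unitary_op U"
  shows "(\<Sum>p\<in>UNIV. inner_v (t21 (app U (bv p)) a) (app X (t21 (app U (bv p)) b)))
       = (\<Sum>p\<in>UNIV. inner_v (t21 (bv p) a) (app X (t21 (bv p) b)))"
proof -
  define K where "K q q' = inner_v (t21 (bv q) a) (app X (t21 (bv q') b))" for q q'
  have col: "app U (bv p) = (\<lambda>x. \<Sum>q\<in>UNIV. U q p * bv q x)" for p
    by (subst vec_expand) (simp add: app_bv)
  have "inner_v (t21 (app U (bv p)) a) (app X (t21 (app U (bv p)) b))
      = (\<Sum>q\<in>UNIV. \<Sum>q'\<in>UNIV. cnj (U q p) * (U q' p * K q q'))" for p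
    unfolding col t21_sum app_sum inner_sum_l inner_sum_r K_def
    by (simp add: sum_distrib_left)
  then have "(\<Sum>p\<in>UNIV. inner_v (t21 (app U (bv p)) a) (app X (t21 (app U (bv p)) b)))
      = (\<Sum>p\<in>UNIV. \<Sum>q\<in>UNIV. \<Sum>q'\<in>UNIV. cnj (U q p) * (U q' p * K q q'))" by simp
  also have "\<dots> = (\<Sum>q\<in>UNIV. \<Sum>q'\<in>UNIV. \<Sum>p\<in>UNIV. cnj (U q p) * (U q' p * K q q'))"
    by (rule sum3_rot)
  also have "\<dots> = (\<Sum>q\<in>UNIV. \<Sum>q'\<in>UNIV. comp_op U (adj U) q' q * K q q')"
    by (simp add: comp_op_def adj_def sum_distrib_right sum_distrib_left mult_ac)
  also have "\<dots> = (\<Sum>q\<in>UNIV. K q q)"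
    using U by (simp add: unitary_op_def id_op_def)
  finally show ?thesis unfolding K_def .
qed

context mus
begin

definition Tm where "Tm = Lmap V trf"
definition Li where "Li i = Lmap V (omega (bv i) (bv i))"

lemma Tm_eq: "Tm = (\<lambda>j l. \<Sum>i\<in>UNIV. Li i j l)"
  unfolding Tm_def Li_def Lmap_def trf_def omega_def
  by (simp add: inner_bv app_bv)

lemma Tm_app: "app Tm x = (\<lambda>j. \<Sum>i\<in>UNIV. app (Li i) x j)"
  unfolding Tm_eq app_def
  apply (rule ext)
  apply (simp add: sum_distrib_right)
  apply (rule sum.swap)
  done

lemma inner_Tm: "inner_v a (app Tm b) = (\<Sum>i\<in>UNIV. inner_v (tensor_v (bv i) a) (app V (tensor_v (bv i) b)))"
  by (simp add: Tm_app inner_sum_r1 Li_def inner_Lmap)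

lemma LL: "inner_v a (app (Lmap V (omega x1 y1)) (app (Lmap V (omega x2 y2)) b))
  = inner_v (tensor_v x1 (tensor_v x2 a)) (app (leg13 V) (app (leg23 V) (tensor_v y1 (tensor_v y2 b))))"
proof -
  have "inner_v a (app (Lmap V (omega x1 y1)) (app (Lmap V (omega x2 y2)) b))
      = inner_v (app (adj (Lmap V (omega x1 y1))) a) (app (Lmap V (omega x2 y2)) b)"
    by (rule inner_adj)
  also have "\<dots> = inner_v (sl1 y1 (app (adj V) (tensor_v x1 a))) (sl1 x2 (app V (tensor_v y2 b)))"
    by (simp add: app_adj_Lmap app_Lmap)
  also have "\<dots> = inner_v (t13 (app (adj V) (tensor_v x1 a)) x2) (tensor_v y1 (app V (tensor_v y2 b)))"
    by (simp add: mix2)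
  also have "\<dots> = inner_v (app (leg13 (adj V)) (tensor_v x1 (tensor_v x2 a))) (app (leg23 V) (tensor_v y1 (tensor_v y2 b)))"
    by (simp only: t3_13[of x1 x2 a] app_leg13 app_leg23)
  also have "\<dots> = inner_v (tensor_v x1 (tensor_v x2 a)) (app (leg13 V) (app (leg23 V) (tensor_v y1 (tensor_v y2 b))))"
    by (simp add: inner_13)
  finally show ?thesis .
qed

lemma T2: "app Tm (app Tm b) = (\<lambda>j. of_nat (card (UNIV::'i set)) * app Tm b j)"
proof (rule vec_eq_inner)
  fix a :: "'i vec"
  define G where "G p = inner_v (t21 (app V (bv p)) a) (app (leg23 V) (t21 (app V (bv p)) b))" for p
  have "inner_v a (app Tm (app Tm b)) = (\<Sum>i\<in>UNIV. \<Sum>i'\<in>UNIV. inner_v a (app (Li i) (app (Li i') b)))"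
    apply (simp add: Tm_app app_sum1 inner_sum_r1)
    apply (rule sum.swap)
    done
  also have "\<dots> = (\<Sum>i\<in>UNIV. \<Sum>i'\<in>UNIV. G (i,i'))"
  proof (intro sum.cong refl)
    fix i i'
    have "inner_v a (app (Li i) (app (Li i') b))
      = inner_v (tensor_v (bv i) (tensor_v (bv i') a)) (app (leg13 V) (app (leg23 V) (tensor_v (bv i) (tensor_v (bv i') b))))"
      unfolding Li_def by (rule LL)
    also have "\<dots> = inner_v (tensor_v (bv i) (tensor_v (bv i') a)) (app (leg12 (adj V)) (app (leg23 V) (app (leg12 V) (tensor_v (bv i) (tensor_v (bv i') b)))))"
      by (simp add: pent_i)
    also have "\<dots> = inner_v (app (leg12 V) (tensor_v (bv i) (tensor_v (bv i') a))) (app (leg23 V) (app (leg12 V) (tensor_v (bv i) (tensor_v (bv i') b))))"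
      by (simp add: inner_12a)
    also have "\<dots> = G (i,i')"
      unfolding G_def by (simp add: t3_21 app_leg12 tensor_bv)
    finally show "inner_v a (app (Li i) (app (Li i') b)) = G (i,i')" .
  qed
  also have "\<dots> = (\<Sum>p\<in>UNIV. G p)" by (simp add: sum_pair)
  also have "\<dots> = (\<Sum>p\<in>UNIV. inner_v (t21 (bv p) a) (app (leg23 V) (t21 (bv p) b)))"
    unfolding G_def by (rule PTr[OF unit])
  also have "\<dots> = (\<Sum>i\<in>(UNIV::'i set). \<Sum>i'\<in>UNIV. inner_v (tensor_v (bv i') a) (app V (tensor_v (bv i') b)))"
    by (simp add: sum_pair tensor_bv[symmetric] t3_21[symmetric] app_leg23 inner_tensor inner_bv_bv)
  also have "\<dots> = of_nat (card (UNIV::'i set)) * inner_v a (app Tm b)"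
    by (simp add: inner_Tm)
  also have "\<dots> = inner_v a (\<lambda>j. of_nat (card (UNIV::'i set)) * app Tm b j)"
    by (simp add: inner_scale_r)
  finally show "inner_v a (app Tm (app Tm b)) = inner_v a (\<lambda>j. of_nat (card (UNIV::'i set)) * app Tm b j)" .
qed

end

definition gsl :: "'a vec \<Rightarrow> ('a \<times> 'b) vec \<Rightarrow> 'b vec" where
  "gsl a U = (\<lambda>j. \<Sum>i\<in>UNIV. cnj (a i) * U (i,j))"

lemma inner_gsl: "inner_v x (gsl a U) = inner_v (tensor_v (a::'a::finite vec) x) (U::('a\<times>'b::finite) vec)"
  unfolding inner_v_def gsl_def tensor_v_def
  apply (simp add: sum_pair sum_distrib_left mult_ac)
  apply (rule sum.swap)
  done

lemma gsl_t21: "gsl a (t21 W f) = tensor_v (sl1 a W) f"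
  by (auto simp: gsl_def t21_def tensor_v_def sl1_def sum_distrib_right mult.assoc intro!: ext)

lemma SL1: "app M (tensor_v (sl1 a W) b) = gsl a (app (leg23 M) (t21 W b))"
  unfolding app_def gsl_def leg23_def t21_def tensor_v_def sl1_def
  apply (rule ext)
  apply (clarsimp simp: sum_triple sum_pair sum_distrib_left sum_distrib_right mult_ac)
  apply (rule sym)
  apply (rule trans[OF sum3_rot])
  apply (simp add: mult_ac)
  done

lemma SL2: "app (tensor_op (Lmap V (omega a b)) id_op) w = gsl a (app (leg12 V) (tensor_v b w))"
  unfolding app_def gsl_def leg12_def tensor_op_def tensor_v_def Lmap_def omega_def inner_v_def id_op_def
  apply (rule ext)
  apply (clarsimp simp: sum_triple sum_pair sum_distrib_left sum_distrib_right mult_ac)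
  apply (rule trans[OF sum3_rot])
  apply (simp add: mult_ac)
  done

lemma mix3: "inner_v (t21 U a) (tensor_v b W) = inner_v (tensor_v (sl1 b U) a) W"
  unfolding inner_v_def t21_def tensor_v_def sl1_def
  apply (simp add: sum_triple sum_pair sum_distrib_left sum_distrib_right mult_ac)
  apply (rule trans[OF sum3_rot])
  apply (simp add: mult_ac)
  done

lemma t13_sum: "t13 (\<lambda>x. \<Sum>q\<in>A. c q * g q x) a = (\<lambda>x. \<Sum>q\<in>A. c q * t13 (g q) a x)"
  by (auto simp: t13_def sum_distrib_right mult.assoc intro!: ext)

lemma t13_bv: "t13 (bv q) c = t21 (tensor_v (bv (fst q)) c) (bv (snd q))"
proof -
  obtain m r where q: "q = (m,r)" by fastforce
  show ?thesis unfolding q by (simp add: tensor_bv[symmetric] t3_13[symmetric] t3_21)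
qed

lemma leg12_t13_fix:
  fixes V :: "('a::finite \<times> 'a) op"
  assumes fx: "\<And>x. app V (tensor_v x c) = tensor_v x c"
  shows "app (leg12 V) (t13 W c) = t13 W c"
proof -
  have W: "t13 W c = (\<lambda>x. \<Sum>q\<in>UNIV. W q * t21 (tensor_v (bv (fst q)) c) (bv (snd q)) x)"
    by (subst vec_expand[of W]) (simp add: t13_sum t13_bv)
  show ?thesis by (subst (1 2) W) (simp add: app_sum app_leg12 fx)
qed

lemma resol:
  fixes V :: "('a::finite \<times> 'a) op"
  shows "inner_v (tensor_v x (tensor_v y z)) (app (leg12 V) (app (leg13 V) (tensor_v h (tensor_v a b))))
   = (\<Sum>m\<in>UNIV. inner_v (tensor_v x y) (app V (tensor_v (bv m) a)) * inner_v (tensor_v (bv m) z) (app V (tensor_v h b)))"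
proof -
  define W where "W = app V (tensor_v h b)"
  have "app (leg13 V) (tensor_v h (tensor_v a b)) = t13 W a"
    unfolding W_def by (simp add: t3_13 app_leg13)
  also have "\<dots> = (\<lambda>x. \<Sum>q\<in>UNIV. W q * t21 (tensor_v (bv (fst q)) a) (bv (snd q)) x)"
    by (subst vec_expand[of W]) (simp add: t13_sum t13_bv)
  finally have e1: "app (leg13 V) (tensor_v h (tensor_v a b)) = (\<lambda>x. \<Sum>q\<in>UNIV. W q * t21 (tensor_v (bv (fst q)) a) (bv (snd q)) x)" .
  have "inner_v (tensor_v x (tensor_v y z)) (app (leg12 V) (app (leg13 V) (tensor_v h (tensor_v a b))))
    = (\<Sum>q\<in>UNIV. W q * (inner_v (tensor_v x y) (app V (tensor_v (bv (fst q)) a)) * cnj (z (snd q))))"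
    unfolding e1 by (simp add: app_sum inner_sum_r app_leg12 t3_21 inner_t21 inner_bv_r)
  also have "\<dots> = (\<Sum>m\<in>UNIV. \<Sum>r\<in>UNIV. W (m,r) * (inner_v (tensor_v x y) (app V (tensor_v (bv m) a)) * cnj (z r)))"
    by (simp add: sum_pair)
  also have "\<dots> = (\<Sum>m\<in>UNIV. inner_v (tensor_v x y) (app V (tensor_v (bv m) a)) * inner_v (tensor_v (bv m) z) W)"
  proof (rule sum.cong[OF refl])
    fix m
    have sl: "sl1 (bv m) W = (\<lambda>r. W (m,r))"
    proof
      fix r
      have "sl1 (bv m) W r = inner_v (bv m) (\<lambda>i. W (i,r))" by (simp add: sl1_def inner_v_def)
      then show "sl1 (bv m) W r = W (m,r)" by (simp add: inner_bv)
    qed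
    have "inner_v (tensor_v (bv m) z) W = inner_v z (sl1 (bv m) W)" by (simp add: inner_sl1)
    also have "\<dots> = (\<Sum>r\<in>UNIV. cnj (z r) * W (m,r))" by (simp add: sl inner_v_def)
    finally have "inner_v (tensor_v (bv m) z) W = (\<Sum>r\<in>UNIV. cnj (z r) * W (m,r))" .
    then show "(\<Sum>r\<in>UNIV. W (m,r) * (inner_v (tensor_v x y) (app V (tensor_v (bv m) a)) * cnj (z r)))
      = inner_v (tensor_v x y) (app V (tensor_v (bv m) a)) * inner_v (tensor_v (bv m) z) W"
      by (simp add: sum_distrib_left mult_ac)
  qed
  finally show ?thesis unfolding W_def .
qed


context mus
begin

lemma ee: "app V (tensor_v e e) = tensor_v e e" by (rule e_fix)

definition Re where "Re = rhomap V (omega e e)"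

lemma Re_e: "app Re e = e"
  unfolding Re_def by (rule R_of_fix[OF e_unit ee])

lemma Re_col: "\<exists>s. app Re (bv k) = (\<lambda>i. s * e i)"
proof -
  have "app V (tensor_v (app Re (bv k)) e) = tensor_v (app Re (bv k)) e"
    unfolding Re_def by (rule R_range[OF ee e_unit])
  then show ?thesis by (rule fixed_from_e)
qed

lemma tr_Re: "(\<Sum>i\<in>UNIV. inner_v (bv i) (app Re (bv i))) = 1"
proof -
  have "\<forall>k. \<exists>s. app Re (bv k) = (\<lambda>i. s * e i)" using Re_col by blast
  then obtain s where s: "\<forall>k. app Re (bv k) = (\<lambda>i. s k * e i)" using choice[of "\<lambda>k s. app Re (bv k) = (\<lambda>i. s * e i)"] by blast
  have "e = app Re e" by (simp add: Re_e)
  also have "\<dots> = app Re (\<lambda>x. \<Sum>q\<in>UNIV. e q * bv q x)" by (subst vec_expand[of e]) (rule refl)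
  also have "\<dots> = (\<lambda>x. (\<Sum>q\<in>UNIV. e q * s q) * e x)"
    by (simp add: app_sum s sum_distrib_right mult.assoc)
  finally have E: "e = (\<lambda>x. (\<Sum>q\<in>UNIV. e q * s q) * e x)" .
  obtain i0 where i0: "e i0 \<noteq> 0" using e_nz by auto
  from fun_cong[OF E, of i0] i0 have one: "(\<Sum>q\<in>UNIV. e q * s q) = 1" by simp
  have "(\<Sum>i\<in>UNIV. inner_v (bv i) (app Re (bv i))) = (\<Sum>i\<in>UNIV. s i * e i)"
    by (simp add: inner_bv s)
  also have "\<dots> = 1" using one by (simp add: mult.commute)
  finally show ?thesis .
qed

definition cv where "cv = app Tm e"

lemma inner_e_cv: "inner_v e cv = 1"
proof -
  have "inner_v e cv = (\<Sum>i\<in>UNIV. inner_v (tensor_v (bv i) e) (app V (tensor_v (bv i) e)))"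
    unfolding cv_def by (rule inner_Tm)
  also have "\<dots> = (\<Sum>i\<in>UNIV. inner_v (bv i) (app Re (bv i)))"
    unfolding Re_def by (simp add: inner_rhomap)
  finally show ?thesis using tr_Re by simp
qed

lemma inner_cv_e: "inner_v cv e = 1"
  using inner_e_cv inner_cnj[of e cv] by simp

lemma cv_fix_bv: "\<forall>i\<in>UNIV. app V (tensor_v (bv i) cv) = tensor_v (bv i) cv"
proof -
  have T: "app Tm cv = (\<lambda>j. of_nat (card (UNIV::'i set)) * cv j)"
    unfolding cv_def by (rule T2)
  have "(\<Sum>i\<in>UNIV. inner_v (tensor_v (bv i) cv) (app V (tensor_v (bv i) cv))) = inner_v cv (app Tm cv)"
    by (simp add: inner_Tm)
  also have "\<dots> = of_nat (card (UNIV::'i set)) * inner_v cv cv" by (simp add: T inner_scale_r)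
  also have "\<dots> = (\<Sum>i\<in>(UNIV::'i set). inner_v (tensor_v (bv i) cv) (tensor_v (bv i) cv))"
    by (simp add: inner_tensor inner_bv_bv)
  finally have S: "(\<Sum>i\<in>UNIV. inner_v (tensor_v (bv i) cv) (app V (tensor_v (bv i) cv))) =
    (\<Sum>i\<in>(UNIV::'i set). inner_v (tensor_v (bv i) cv) (tensor_v (bv i) cv))" .
  show ?thesis using unitary_CS_sum[OF unit finite_UNIV, where v="\<lambda>i. tensor_v (bv i) cv"] S by simp
qed

lemma cv_fix: "app V (tensor_v b cv) = tensor_v b cv"
proof -
  have eb: "tensor_v b cv = (\<lambda>x. \<Sum>q\<in>UNIV. b q * tensor_v (bv q) cv x)"
    by (subst vec_expand[of b]) (simp add: tensor_sum_l)
  show ?thesis by (subst (1 2) eb) (simp add: app_sum cv_fix_bv)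
qed

lemma cv_fix_adj: "app (adj V) (tensor_v b cv) = tensor_v b cv"
  by (rule unitary_fix_adj[OF unit cv_fix])

lemma L_e: "Lmap V (omega a e) = (\<lambda>j l. inner_v a e * id_op j l)"
proof (rule op_eq_app, rule vec_eq_inner)
  fix x y
  show "inner_v y (app (Lmap V (omega a e)) x) = inner_v y (app (\<lambda>j l. inner_v a e * id_op j l) x)"
    by (simp add: inner_Lmap e_fix inner_tensor app_opscale inner_scale_r)
qed

lemma L_e2: "Lmap V (omega e b) = (\<lambda>j l. inner_v e b * id_op j l)"
proof (rule op_eq_app, rule vec_eq_inner)
  fix x y
  have "inner_v y (app (Lmap V (omega e b)) x) = inner_v (tensor_v e y) (app V (tensor_v b x))"
    by (simp add: inner_Lmap)
  also have "\<dots> = inner_v (app (adj V) (tensor_v e y)) (tensor_v b x)" by (simp add: inner_adj)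
  also have "\<dots> = inner_v y (app (\<lambda>j l. inner_v e b * id_op j l) x)"
    by (simp add: e_fix_adj inner_tensor app_opscale inner_scale_r)
  finally show "inner_v y (app (Lmap V (omega e b)) x) = inner_v y (app (\<lambda>j l. inner_v e b * id_op j l) x)" .
qed

lemma id_Salg: "id_op \<in> Salg V"
proof -
  have L: "Lmap V (omega e e) = id_op" using L_e[of e] e_unit by simp
  show ?thesis unfolding Salg_def using lin_omega[of e e] L[symmetric] by blast
qed

lemma Rec_vec: "Lmap V (omega a b) = Lmap V (omega cv (app (Lmap V (omega a b)) e))"
proof (rule op_eq_app, rule vec_eq_inner)
  fix x y :: "'i vec"
  define W where "W = app V (tensor_v b e)"
  have "inner_v y (app (Lmap V (omega cv (app (Lmap V (omega a b)) e))) x)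
      = inner_v (tensor_v cv y) (app V (tensor_v (sl1 a W) x))"
    unfolding W_def by (subst inner_Lmap) (simp add: app_Lmap)
  also have "\<dots> = inner_v (tensor_v a (tensor_v cv y)) (app (leg23 V) (t21 W x))"
    by (simp add: SL1 inner_gsl)
  also have "t21 W x = app (leg12 V) (tensor_v b (tensor_v e x))"
    unfolding W_def by (simp add: t3_21 app_leg12)
  also have "app (leg23 V) (app (leg12 V) (tensor_v b (tensor_v e x)))
      = app (leg12 V) (app (leg13 V) (app (leg23 V) (tensor_v b (tensor_v e x))))"
    by (simp add: pent)
  also have "app (leg23 V) (tensor_v b (tensor_v e x)) = tensor_v b (tensor_v e x)"
    by (simp add: app_leg23 e_fix)
  also have "inner_v (tensor_v a (tensor_v cv y)) (app (leg12 V) (app (leg13 V) (tensor_v b (tensor_v e x))))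
      = inner_v (app (leg12 (adj V)) (tensor_v a (tensor_v cv y))) (app (leg13 V) (tensor_v b (tensor_v e x)))"
    by (simp add: inner_12)
  also have "app (leg12 (adj V)) (tensor_v a (tensor_v cv y)) = tensor_v a (tensor_v cv y)"
    by (simp add: t3_21 app_leg12 cv_fix_adj)
  also have "inner_v (tensor_v a (tensor_v cv y)) (app (leg13 V) (tensor_v b (tensor_v e x)))
      = inner_v (tensor_v a y) (app V (tensor_v b x))"
    by (simp add: t3_13 app_leg13 inner_t13 inner_cv_e)
  also have "\<dots> = inner_v y (app (Lmap V (omega a b)) x)" by (simp add: inner_Lmap)
  finally show "inner_v y (app (Lmap V (omega a b)) x) = inner_v y (app (Lmap V (omega cv (app (Lmap V (omega a b)) e))) x)"
    by simp
qed

end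

lemma app_opsum: "app (\<lambda>j l. \<Sum>q\<in>A. c q * B q j l) (x::'a::finite vec) = (\<lambda>j. \<Sum>q\<in>A. c q * app (B q) x j)"
  unfolding app_def
  apply (rule ext)
  apply (simp add: sum_distrib_right sum_distrib_left mult_ac)
  apply (rule sum.swap)
  done

lemma sl1_sum: "sl1 a (\<lambda>p. \<Sum>q\<in>A. c q * g q p) = (\<lambda>j. \<Sum>q\<in>A. c q * sl1 a (g q) j)"
  unfolding sl1_def
  apply (rule ext)
  apply (simp add: sum_distrib_left mult_ac)
  apply (rule sum.swap)
  done

context mus
begin

lemma Rec:
  assumes "x \<in> Salg V"
  shows "x = Lmap V (omega cv (app x e))"
proof -
  obtain w where w: "lin_functional w" and x: "x = Lmap V w" using assms unfolding Salg_def by blast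
  define c where "c q = w (E_op (fst q) (snd q))" for q :: "'i \<times> 'i"
  define B where "B q = Lmap V (omega (bv (fst q)) (bv (snd q)))" for q :: "'i \<times> 'i"
  have xB: "x = (\<lambda>j l. \<Sum>q\<in>UNIV. c q * B q j l)"
    unfolding x c_def B_def by (subst Lmap_expand[OF w]) (simp add: sum_pair)
  have "app x b = app (Lmap V (omega cv (app x e))) b" for b
  proof -
    have "app (Lmap V (omega cv (app x e))) b = sl1 cv (app V (tensor_v (app x e) b))"
      by (simp add: app_Lmap)
    also have "\<dots> = (\<lambda>j. \<Sum>q\<in>UNIV. c q * sl1 cv (app V (tensor_v (app (B q) e) b)) j)"
      by (subst xB) (simp add: app_opsum tensor_sum_l app_sum sl1_sum)
    also have "\<dots> = (\<lambda>j. \<Sum>q\<in>UNIV. c q * app (B q) b j)"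
    proof -
      have "sl1 cv (app V (tensor_v (app (B q) e) b)) = app (B q) b" for q
        using Rec_vec[of "bv (fst q)" "bv (snd q)"] unfolding B_def
        by (metis app_Lmap)
      then show ?thesis by simp
    qed
    also have "\<dots> = app x b" by (subst xB) (simp add: app_opsum)
    finally show ?thesis by simp
  qed
  then show ?thesis by (rule op_eq_app)
qed

lemma S_star: "adj (Lmap V (omega xi p)) = Lmap V (omega cv (sl1 p (app (adj V) (tensor_v xi e))))"
proof (rule op_eq_app, rule vec_eq_inner)
  fix x y :: "'i vec"
  define W where "W = app (adj V) (tensor_v xi e)"
  have "inner_v y (app (Lmap V (omega cv (sl1 p W))) x) = inner_v (tensor_v cv y) (app V (tensor_v (sl1 p W) x))"
    by (rule inner_Lmap)
  also have "\<dots> = inner_v (tensor_v p (tensor_v cv y)) (app (leg23 V) (t21 W x))"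
    by (simp add: SL1 inner_gsl)
  also have "t21 W x = app (leg12 (adj V)) (tensor_v xi (tensor_v e x))"
    unfolding W_def by (simp add: t3_21 app_leg12)
  also have "app (leg23 V) (app (leg12 (adj V)) (tensor_v xi (tensor_v e x)))
     = app (leg13 (adj V)) (app (leg12 (adj V)) (app (leg23 V) (tensor_v xi (tensor_v e x))))"
    by (rule pent_iv)
  also have "app (leg23 V) (tensor_v xi (tensor_v e x)) = tensor_v xi (tensor_v e x)"
    by (simp add: app_leg23 e_fix)
  also have "inner_v (tensor_v p (tensor_v cv y)) (app (leg13 (adj V)) (app (leg12 (adj V)) (tensor_v xi (tensor_v e x))))
     = inner_v (app (leg13 V) (tensor_v p (tensor_v cv y))) (app (leg12 (adj V)) (tensor_v xi (tensor_v e x)))"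
    by (simp add: inner_13a)
  also have "app (leg13 V) (tensor_v p (tensor_v cv y)) = t13 (app V (tensor_v p y)) cv"
    by (simp add: t3_13 app_leg13)
  also have "inner_v (t13 (app V (tensor_v p y)) cv) (app (leg12 (adj V)) (tensor_v xi (tensor_v e x)))
     = inner_v (app (leg12 V) (t13 (app V (tensor_v p y)) cv)) (tensor_v xi (tensor_v e x))"
    by (simp add: inner_12a)
  also have "app (leg12 V) (t13 (app V (tensor_v p y)) cv) = t13 (app V (tensor_v p y)) cv"
    by (rule leg12_t13_fix) (rule cv_fix)
  also have "inner_v (t13 (app V (tensor_v p y)) cv) (tensor_v xi (tensor_v e x)) = inner_v (app V (tensor_v p y)) (tensor_v xi x)"
    by (simp add: t3_13 inner_t13 inner_cv_e)
  also have "\<dots> = inner_v y (app (adj (Lmap V (omega xi p))) x)"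
    by (simp add: app_adj_Lmap inner_sl1 inner_adj2)
  finally show "inner_v y (app (adj (Lmap V (omega xi p))) x) = inner_v y (app (Lmap V (omega cv (sl1 p W))) x)"
    by simp
qed

lemma Le_fix:
  assumes bp: "app V (tensor_v b p) = tensor_v b p"
  shows "app V (tensor_v (app (Lmap V (omega a b)) e) p) = tensor_v (app (Lmap V (omega a b)) e) p"
proof (rule vec_eq_inner)
  fix y :: "('i \<times> 'i) vec"
  define W where "W = app V (tensor_v b e)"
  have "inner_v y (app V (tensor_v (app (Lmap V (omega a b)) e) p)) = inner_v y (app V (tensor_v (sl1 a W) p))"
    unfolding W_def by (simp add: app_Lmap)
  also have "\<dots> = inner_v (tensor_v a y) (app (leg23 V) (t21 W p))"
    by (simp add: SL1 inner_gsl)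
  also have "t21 W p = app (leg12 V) (tensor_v b (tensor_v e p))"
    unfolding W_def by (simp add: t3_21 app_leg12)
  also have "app (leg23 V) (app (leg12 V) (tensor_v b (tensor_v e p)))
     = app (leg12 V) (app (leg13 V) (app (leg23 V) (tensor_v b (tensor_v e p))))"
    by (simp add: pent)
  also have "app (leg23 V) (tensor_v b (tensor_v e p)) = tensor_v b (tensor_v e p)"
    by (simp add: app_leg23 e_fix)
  also have "app (leg13 V) (tensor_v b (tensor_v e p)) = tensor_v b (tensor_v e p)"
    by (simp add: t3_13 app_leg13 bp)
  also have "app (leg12 V) (tensor_v b (tensor_v e p)) = t21 W p"
    unfolding W_def by (simp add: t3_21 app_leg12)
  also have "inner_v (tensor_v a y) (t21 W p) = inner_v y (tensor_v (sl1 a W) p)"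
    by (simp add: inner_gsl[symmetric] gsl_t21)
  finally show "inner_v y (app V (tensor_v (app (Lmap V (omega a b)) e) p)) = inner_v y (tensor_v (app (Lmap V (omega a b)) e) p)"
    unfolding W_def by (simp add: app_Lmap)
qed

lemma L_prod:
  assumes bp: "app V (tensor_v b p) = tensor_v b p"
  shows "app (Lmap V (omega a b)) (app (Lmap V (omega xi p)) z)
       = app (Lmap V (omega (app (Lmap V (omega b a)) xi) p)) z"
proof (rule vec_eq_inner)
  fix y :: "'i vec"
  have "inner_v y (app (Lmap V (omega a b)) (app (Lmap V (omega xi p)) z))
     = inner_v (tensor_v a (tensor_v xi y)) (app (leg13 V) (app (leg23 V) (tensor_v b (tensor_v p z))))"
    by (rule LL)
  also have "\<dots> = inner_v (tensor_v a (tensor_v xi y)) (app (leg12 (adj V)) (app (leg23 V) (app (leg12 V) (tensor_v b (tensor_v p z)))))"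
    by (simp add: pent_i)
  also have "app (leg12 V) (tensor_v b (tensor_v p z)) = tensor_v b (tensor_v p z)"
    by (simp add: t3_21 app_leg12 bp)
  also have "inner_v (tensor_v a (tensor_v xi y)) (app (leg12 (adj V)) (app (leg23 V) (tensor_v b (tensor_v p z))))
     = inner_v (app (leg12 V) (tensor_v a (tensor_v xi y))) (app (leg23 V) (tensor_v b (tensor_v p z)))"
    by (simp add: inner_12a)
  also have "\<dots> = inner_v (t21 (app V (tensor_v a xi)) y) (tensor_v b (app V (tensor_v p z)))"
    by (simp only: t3_21[of a xi y] app_leg12 app_leg23)
  also have "\<dots> = inner_v (tensor_v (sl1 b (app V (tensor_v a xi))) y) (app V (tensor_v p z))"
    by (rule mix3)
  also have "\<dots> = inner_v y (app (Lmap V (omega (app (Lmap V (omega b a)) xi) p)) z)"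
    by (simp add: app_Lmap inner_sl1)
  finally show "inner_v y (app (Lmap V (omega a b)) (app (Lmap V (omega xi p)) z)) = inner_v y (app (Lmap V (omega (app (Lmap V (omega b a)) xi) p)) z)" .
qed

lemma kappa_fix:
  assumes pp: "app V (tensor_v p p) = tensor_v p p" and pu: "inner_v p p = 1"
  shows "app V (tensor_v (sl1 p (app (adj V) (tensor_v xi e))) p) = tensor_v (sl1 p (app (adj V) (tensor_v xi e))) p"
proof (rule fix_R[OF pu], rule vec_eq_inner)
  fix a :: "'i vec"
  define W where "W = app (adj V) (tensor_v xi e)"
  have "inner_v a (app (rhomap V (omega p p)) (sl1 p W)) = inner_v (tensor_v a p) (app V (tensor_v (sl1 p W) p))"
    by (rule inner_rhomap)
  also have "\<dots> = inner_v (tensor_v p (tensor_v a p)) (app (leg23 V) (t21 W p))"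
    by (simp add: SL1 inner_gsl)
  also have "t21 W p = app (leg12 (adj V)) (tensor_v xi (tensor_v e p))"
    unfolding W_def by (simp add: t3_21 app_leg12)
  also have "app (leg23 V) (app (leg12 (adj V)) (tensor_v xi (tensor_v e p)))
     = app (leg13 (adj V)) (app (leg12 (adj V)) (app (leg23 V) (tensor_v xi (tensor_v e p))))"
    by (rule pent_iv)
  also have "app (leg23 V) (tensor_v xi (tensor_v e p)) = tensor_v xi (tensor_v e p)"
    by (simp add: app_leg23 e_fix)
  also have "inner_v (tensor_v p (tensor_v a p)) (app (leg13 (adj V)) (app (leg12 (adj V)) (tensor_v xi (tensor_v e p))))
     = inner_v (app (leg13 V) (tensor_v p (tensor_v a p))) (app (leg12 (adj V)) (tensor_v xi (tensor_v e p)))"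
    by (simp add: inner_13a)
  also have "app (leg13 V) (tensor_v p (tensor_v a p)) = tensor_v p (tensor_v a p)"
    by (simp add: t3_13 app_leg13 pp)
  also have "inner_v (tensor_v p (tensor_v a p)) (app (leg12 (adj V)) (tensor_v xi (tensor_v e p)))
     = inner_v (tensor_v p a) W"
    unfolding W_def by (simp add: t3_21 app_leg12 inner_t21 pu)
  also have "\<dots> = inner_v a (sl1 p W)" by (simp add: inner_sl1)
  finally show "inner_v a (app (rhomap V (omega p p)) (sl1 p (app (adj V) (tensor_v xi e)))) = inner_v a (sl1 p (app (adj V) (tensor_v xi e)))"
    unfolding W_def .
qed

lemma L_pres:
  assumes pu: "inner_v p p = 1" and bp: "app V (tensor_v b p) = tensor_v b p"
    and zp: "app V (tensor_v z p) = tensor_v z p"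
  shows "app V (tensor_v (app (Lmap V (omega a b)) z) p) = tensor_v (app (Lmap V (omega a b)) z) p"
proof (rule fix_R[OF pu], rule vec_eq_inner)
  fix y :: "'i vec"
  define W where "W = app V (tensor_v b z)"
  have "inner_v y (app (rhomap V (omega p p)) (app (Lmap V (omega a b)) z)) = inner_v (tensor_v y p) (app V (tensor_v (sl1 a W) p))"
    unfolding W_def by (simp add: inner_rhomap app_Lmap)
  also have "\<dots> = inner_v (tensor_v a (tensor_v y p)) (app (leg23 V) (t21 W p))"
    by (simp add: SL1 inner_gsl)
  also have "t21 W p = app (leg12 V) (tensor_v b (tensor_v z p))"
    unfolding W_def by (simp add: t3_21 app_leg12)
  also have "app (leg23 V) (app (leg12 V) (tensor_v b (tensor_v z p)))
     = app (leg12 V) (app (leg13 V) (app (leg23 V) (tensor_v b (tensor_v z p))))"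
    by (simp add: pent)
  also have "app (leg23 V) (tensor_v b (tensor_v z p)) = tensor_v b (tensor_v z p)"
    by (simp add: app_leg23 zp)
  also have "app (leg13 V) (tensor_v b (tensor_v z p)) = tensor_v b (tensor_v z p)"
    by (simp add: t3_13 app_leg13 bp)
  also have "inner_v (tensor_v a (tensor_v y p)) (app (leg12 V) (tensor_v b (tensor_v z p)))
     = inner_v (tensor_v a y) W"
    unfolding W_def by (simp add: t3_21 app_leg12 inner_t21 pu)
  also have "\<dots> = inner_v y (app (Lmap V (omega a b)) z)"
    unfolding W_def by (simp add: inner_Lmap)
  finally show "inner_v y (app (rhomap V (omega p p)) (app (Lmap V (omega a b)) z)) = inner_v y (app (Lmap V (omega a b)) z)" .
qed

lemma delta_formula:
  "inner_v y (app (delta V (Lmap V (omega a b))) u)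
   = inner_v (tensor_v a y) (app (leg12 V) (app (leg13 V) (tensor_v b u)))"
proof -
  have "inner_v y (app (delta V (Lmap V (omega a b))) u)
     = inner_v (app (adj V) y) (app (tensor_op (Lmap V (omega a b)) id_op) (app (adj V) u))"
    unfolding delta_def by (simp add: app_comp inner_adj)
  also have "\<dots> = inner_v (tensor_v a (app (adj V) y)) (app (leg12 V) (tensor_v b (app (adj V) u)))"
    by (simp add: SL2 inner_gsl)
  also have "\<dots> = inner_v (app (leg23 (adj V)) (tensor_v a y)) (app (leg12 V) (app (leg23 (adj V)) (tensor_v b u)))"
    by (simp add: app_leg23)
  also have "\<dots> = inner_v (tensor_v a y) (app (leg23 V) (app (leg12 V) (app (leg23 (adj V)) (tensor_v b u))))"
    by (simp add: inner_23)
  also have "\<dots> = inner_v (tensor_v a y) (app (leg12 V) (app (leg13 V) (tensor_v b u)))"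
    by (simp add: pent_ii)
  finally show ?thesis .
qed

end

lemma sum_list_reindex:
  assumes "distinct xs" "set xs = UNIV"
  shows "(\<Sum>k<length xs. g (xs ! k)) = (\<Sum>m\<in>UNIV. g m)"
  using sum.reindex_bij_betw[OF bij_betw_nth[OF assms(1) refl assms(2)[symmetric]], of g] by simp

lemma app_opsum1: "app (\<lambda>j l. \<Sum>q\<in>A. B q j l) (x::'a::finite vec) = (\<lambda>j. \<Sum>q\<in>A. app (B q) x j)"
  using app_opsum[where c="\<lambda>_. 1" and A=A and B=B and x=x] by simp

lemma Lmap_scale: "app (Lmap V (omega (\<lambda>i. s * a i) b)) z = (\<lambda>j. cnj s * app (Lmap V (omega a b)) z j)"
  by (simp add: app_Lmap sl1_def sum_distrib_left mult_ac)

lemma lin_add: "lin_functional w1 \<Longrightarrow> lin_functional w2 \<Longrightarrow> lin_functional (\<lambda>T. w1 T + w2 T)"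
  unfolding lin_functional_def by (simp add: distrib_left)

lemma lin_scale: "lin_functional w \<Longrightarrow> lin_functional (\<lambda>T. c * w T)"
  unfolding lin_functional_def by (simp add: distrib_left mult.left_commute)

lemma Salg_add: "x \<in> Salg V \<Longrightarrow> y \<in> Salg V \<Longrightarrow> (\<lambda>i j. x i j + y i j) \<in> Salg V"
proof -
  assume "x \<in> Salg V" "y \<in> Salg V"
  then obtain w1 w2 where w: "lin_functional w1" "lin_functional w2" "x = Lmap V w1" "y = Lmap V w2"
    unfolding Salg_def by blast
  have "(\<lambda>i j. x i j + y i j) = Lmap V (\<lambda>T. w1 T + w2 T)" using w by (simp add: Lmap_def)
  then show ?thesis unfolding Salg_def using lin_add[OF w(1,2)] by blast
qed

lemma Salg_scale: "x \<in> Salg V \<Longrightarrow> (\<lambda>i j. c * x i j) \<in> Salg V"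
proof -
  assume "x \<in> Salg V"
  then obtain w where w: "lin_functional w" "x = Lmap V w" unfolding Salg_def by blast
  have "(\<lambda>i j. c * x i j) = Lmap V (\<lambda>T. c * w T)" using w by (simp add: Lmap_def)
  then show ?thesis unfolding Salg_def using lin_scale[OF w(1)] by blast
qed

lemma Salg_L: "Lmap V (omega a b) \<in> Salg V"
  unfolding Salg_def using lin_omega[of a b] by blast

lemma tensor_add_l: "tensor_v (\<lambda>i. u i + v i) f = (\<lambda>p. tensor_v u f p + tensor_v v f p)"
  by (auto simp: tensor_v_def distrib_right intro!: ext)

lemma tensor_scale_l: "tensor_v (\<lambda>i. c * u i) f = (\<lambda>p. c * tensor_v u f p)"
  by (auto simp: tensor_v_def mult.assoc intro!: ext)

theorem proposition4p2:
  fixes V :: "('i::finite \<times> 'i) op" and e f :: "'i vec"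
  assumes mu: "multiplicative_unitary V"
    and mult1: "\<forall>\<xi>. fixed_vec V \<xi> \<longleftrightarrow> (\<exists>c. \<xi> = (\<lambda>i. c * e i))"
    and e_unit: "inner_v e e = 1"
    and f: "pre_subgroup V e f"
  shows "G_f V e f = {adj (Lmap V (omega \<xi> f)) | \<xi>. True}
       \<and> G_f V e f = {x \<in> Salg V. comp_op x (rho_f V f) = comp_op (rho_f V f) x}
       \<and> G_f V e f = {x \<in> Salg V. comp_op (delta V x) (tensor_op id_op (L_f V f)) = tensor_op x (L_f V f)}
       \<and> G_f V e f \<subseteq> Salg V
       \<and> star_subalgebra (G_f V e f)
       \<and> delta V ` G_f V e f \<subseteq> alg_tensor (Salg V) (G_f V e f)"
proof -
  interpret mus V e using mu mult1 e_unit by unfold_locales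
  have fu: "inner_v f f = 1" and ff: "app V (tensor_v f f) = tensor_v f f"
    and fe: "Complex.Re (inner_v f e) > 0"
    using f unfolding pre_subgroup_def by auto
  have f_nz: "f \<noteq> (\<lambda>i. 0)" using fu by (auto simp: inner_v_def)
  have ef_nz: "inner_v e f \<noteq> 0"
  proof
    assume "inner_v e f = 0"
    then have "inner_v f e = 0" using inner_cnj[of e f] by simp
    then show False using fe by simp
  qed
  define G where "G = G_f V e f"
  define X where "X = {Lmap V (omega \<xi> f) | \<xi>. True}"
  define Y where "Y = {adj (Lmap V (omega \<xi> f)) | \<xi>. True}"
  define Hf where "Hf = H_f V f"
  have Hf_iff: "v \<in> Hf \<longleftrightarrow> app V (tensor_v v f) = tensor_v v f" for v
    by (simp add: Hf_def H_f_def)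
  have G_iff: "x \<in> G \<longleftrightarrow> x \<in> Salg V \<and> app x e \<in> Hf" for x
    by (simp add: G_def G_f_def Hf_def)
  have G_rep: "x = Lmap V (omega cv (app x e))" if "x \<in> G" for x
    using that G_iff Rec by blast
  have XG: "X \<subseteq> G"
  proof
    fix x assume "x \<in> X"
    then obtain \<xi> where x: "x = Lmap V (omega \<xi> f)" unfolding X_def by blast
    show "x \<in> G" unfolding G_iff Hf_iff x using Salg_L Le_fix[OF ff] by blast
  qed
  have GX: "G \<subseteq> X"
  proof
    fix x assume xG: "x \<in> G"
    define \<eta> where "\<eta> = app x e"
    have \<eta>f: "app V (tensor_v \<eta> f) = tensor_v \<eta> f" using xG unfolding G_iff Hf_iff \<eta>_def by blast
    have x: "x = Lmap V (omega cv \<eta>)" unfolding \<eta>_def by (rule G_rep[OF xG])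
    define \<zeta> where "\<zeta> = app (Lmap V (omega \<eta> cv)) e"
    define c where "c = inner_v e f"
    have "app x z = app (Lmap V (omega (\<lambda>i. (1 / cnj c) * \<zeta> i) f)) z" for z
    proof -
      have "app x (app (Lmap V (omega e f)) z) = app (Lmap V (omega \<zeta> f)) z"
        unfolding x \<zeta>_def by (rule L_prod[OF \<eta>f])
      moreover have "app (Lmap V (omega e f)) z = (\<lambda>i. c * z i)"
        by (simp add: L_e2 app_opscale c_def)
      ultimately have H: "app (Lmap V (omega \<zeta> f)) z = (\<lambda>j. c * app x z j)"
        by (simp add: app_scale)
      have "app (Lmap V (omega (\<lambda>i. (1 / cnj c) * \<zeta> i) f)) z = (\<lambda>j. cnj (1 / cnj c) * app (Lmap V (omega \<zeta> f)) z j)"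
        by (rule Lmap_scale)
      then show ?thesis using ef_nz unfolding H c_def
        by (auto simp: field_simps intro!: ext)
    qed
    then have "x = Lmap V (omega (\<lambda>i. (1 / cnj c) * \<zeta> i) f)" by (rule op_eq_app)
    then show "x \<in> X" unfolding X_def by blast
  qed
  have GX_eq: "G = X" using XG GX by blast
  have YG: "Y \<subseteq> G"
  proof
    fix y assume "y \<in> Y"
    then obtain \<xi> where y: "y = adj (Lmap V (omega \<xi> f))" unfolding Y_def by blast
    have "y \<in> Salg V" unfolding y S_star by (rule Salg_L)
    moreover have "app y e \<in> Hf"
      unfolding y Hf_iff app_adj_Lmap by (rule kappa_fix[OF ff fu])
    ultimately show "y \<in> G" using G_iff by blast
  qed
  have XY: "X \<subseteq> Y"
  proof
    fix x assume "x \<in> X"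
    then obtain \<xi> where x: "x = Lmap V (omega \<xi> f)" unfolding X_def by blast
    have "adj x \<in> Y" unfolding Y_def x by blast
    then have "adj x \<in> X" using YG GX_eq by blast
    then obtain \<xi>' where "adj x = Lmap V (omega \<xi>' f)" unfolding X_def by blast
    then have "x = adj (Lmap V (omega \<xi>' f))" by (metis adj_adj)
    then show "x \<in> Y" unfolding Y_def by blast
  qed
  have GY: "G = Y" using XY YG GX_eq by blast
  have G_adj: "adj x \<in> G" if "x \<in> G" for x
  proof -
    from that GY obtain \<xi> where "x = adj (Lmap V (omega \<xi> f))" unfolding Y_def by blast
    then have "adj x = Lmap V (omega \<xi> f)" by simp
    then show ?thesis using GX_eq unfolding X_def by blast
  qed
  have G_pres: "app V (tensor_v (app x b) f) = tensor_v (app x b) f"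
    if "x \<in> G" "app V (tensor_v b f) = tensor_v b f" for x b
  proof -
    have "app V (tensor_v (app x e) f) = tensor_v (app x e) f" using that(1) G_iff Hf_iff by blast
    then show ?thesis using L_pres[OF fu _ that(2)] G_rep[OF that(1)] by metis
  qed
  define R where "R = rho_f V f"
  have R_adj: "adj R = R" unfolding R_def rho_f_def by (rule R_selfadj[OF ff fu])
  have R_rng: "app V (tensor_v (app R b) f) = tensor_v (app R b) f" for b
    unfolding R_def rho_f_def by (rule R_range[OF ff fu])
  have R_fx: "app R v = v" if "app V (tensor_v v f) = tensor_v v f" for v
    unfolding R_def rho_f_def by (rule R_of_fix[OF fu that])
  have G_comm: "comp_op x R = comp_op R x" if xG: "x \<in> G" for x
  proof -
    have c1: "comp_op R (comp_op z R) = comp_op z R" if "z \<in> G" for z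
      by (rule op_eq_app) (simp add: app_comp R_fx G_pres[OF that R_rng])
    have "adj (comp_op R (comp_op (adj x) R)) = adj (comp_op (adj x) R)"
      using c1[OF G_adj[OF xG]] by simp
    then have "comp_op (comp_op R x) R = comp_op R x"
      by (simp add: adj_comp R_adj comp_assoc)
    then show ?thesis using c1[OF xG] by (simp add: comp_assoc)
  qed
  have C2: "G = {x \<in> Salg V. comp_op x R = comp_op R x}"
  proof
    show "G \<subseteq> {x \<in> Salg V. comp_op x R = comp_op R x}" using G_comm G_iff by blast
  next
    show "{x \<in> Salg V. comp_op x R = comp_op R x} \<subseteq> G"
    proof
      fix x assume "x \<in> {x \<in> Salg V. comp_op x R = comp_op R x}"
      then have xS: "x \<in> Salg V" and cm: "comp_op x R = comp_op R x" by auto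
      have Re: "app R e = e" by (rule R_fx) (rule e_fix)
      have "app R (app x e) = app x e"
        using arg_cong[OF cm, of "\<lambda>A. app A e"] by (simp add: app_comp Re)
      then have "app V (tensor_v (app x e) f) = tensor_v (app x e) f"
        unfolding R_def rho_f_def by (rule fix_R[OF fu])
      then show "x \<in> G" using xS G_iff Hf_iff by blast
    qed
  qed
  define Lf where "Lf = L_f V f"
  have Lf_f: "app Lf f = f" unfolding Lf_def L_f_def by (rule L_of_fix[OF fu ff])
  have Lf_rng: "app V (tensor_v f (app Lf b)) = tensor_v f (app Lf b)" for b
    unfolding Lf_def L_f_def by (rule L_range[OF ff fu])
  have C3: "G = {x \<in> Salg V. comp_op (delta V x) (tensor_op id_op Lf) = tensor_op x Lf}"
  proof
    show "G \<subseteq> {x \<in> Salg V. comp_op (delta V x) (tensor_op id_op Lf) = tensor_op x Lf}"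
    proof
      fix x assume xG: "x \<in> G"
      define \<eta> where "\<eta> = app x e"
      have \<eta>f: "app V (tensor_v \<eta> f) = tensor_v \<eta> f" using xG unfolding G_iff Hf_iff \<eta>_def by blast
      have x: "x = Lmap V (omega cv \<eta>)" unfolding \<eta>_def by (rule G_rep[OF xG])
      have "comp_op (delta V x) (tensor_op id_op Lf) = tensor_op x Lf"
      proof (rule op_eq_tensor)
        fix a b :: "'i vec"
        define k where "k = app Lf b"
        have \<eta>k: "app V (tensor_v \<eta> k) = tensor_v \<eta> k"
          unfolding k_def by (rule PT[OF \<eta>f Lf_rng f_nz])
        have "app (delta V x) (tensor_v a k) = tensor_v (app x a) k"
        proof (rule vec_eq_inner)
          fix y :: "('i \<times> 'i) vec"
          have "inner_v y (app (delta V x) (tensor_v a k))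
             = inner_v (tensor_v cv y) (app (leg12 V) (app (leg13 V) (tensor_v \<eta> (tensor_v a k))))"
            unfolding x by (rule delta_formula)
          also have "app (leg13 V) (tensor_v \<eta> (tensor_v a k)) = tensor_v \<eta> (tensor_v a k)"
            by (simp add: t3_13 app_leg13 \<eta>k)
          also have "app (leg12 V) (tensor_v \<eta> (tensor_v a k)) = t21 (app V (tensor_v \<eta> a)) k"
            by (simp add: t3_21 app_leg12)
          also have "inner_v (tensor_v cv y) (t21 (app V (tensor_v \<eta> a)) k) = inner_v y (tensor_v (app x a) k)"
            unfolding x by (simp add: inner_gsl[symmetric] gsl_t21 app_Lmap)
          finally show "inner_v y (app (delta V x) (tensor_v a k)) = inner_v y (tensor_v (app x a) k)" .
        qed
        then show "app (comp_op (delta V x) (tensor_op id_op Lf)) (tensor_v a b) = app (tensor_op x Lf) (tensor_v a b)"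
          by (simp add: app_comp app_tensor k_def)
      qed
      then show "x \<in> {x \<in> Salg V. comp_op (delta V x) (tensor_op id_op Lf) = tensor_op x Lf}"
        using xG G_iff by blast
    qed
  next
    show "{x \<in> Salg V. comp_op (delta V x) (tensor_op id_op Lf) = tensor_op x Lf} \<subseteq> G"
    proof
      fix x assume "x \<in> {x \<in> Salg V. comp_op (delta V x) (tensor_op id_op Lf) = tensor_op x Lf}"
      then have xS: "x \<in> Salg V" and eq: "comp_op (delta V x) (tensor_op id_op Lf) = tensor_op x Lf" by auto
      have "app (comp_op (delta V x) (tensor_op id_op Lf)) (tensor_v e f) = app (tensor_op x Lf) (tensor_v e f)"
        using eq by simp
      then have "app V (tensor_v (app x e) f) = tensor_v (app x e) f"
        by (simp add: app_comp app_tensor Lf_f delta_def e_fix_adj)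
      then show "x \<in> G" using xS G_iff Hf_iff by blast
    qed
  qed
  have SA: "star_subalgebra G"
    unfolding star_subalgebra_def
  proof (intro conjI ballI allI)
    show "id_op \<in> G" using id_Salg G_iff Hf_iff e_fix by simp
  next
    fix x y assume xG: "x \<in> G" and yG: "y \<in> G"
    have "(\<lambda>i j. x i j + y i j) \<in> Salg V" using xG yG G_iff Salg_add by blast
    moreover have "app V (tensor_v (app (\<lambda>i j. x i j + y i j) e) f) = tensor_v (app (\<lambda>i j. x i j + y i j) e) f"
      using xG yG unfolding G_iff Hf_iff by (simp add: app_opadd tensor_add_l app_add)
    ultimately show "(\<lambda>i j. x i j + y i j) \<in> G" using G_iff Hf_iff by blast
  next
    fix c x assume xG: "x \<in> G"
    have "(\<lambda>i j. c * x i j) \<in> Salg V" using xG G_iff Salg_scale by blast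
    moreover have "app V (tensor_v (app (\<lambda>i j. c * x i j) e) f) = tensor_v (app (\<lambda>i j. c * x i j) e) f"
      using xG unfolding G_iff Hf_iff by (simp add: app_opscale tensor_scale_l app_scale)
    ultimately show "(\<lambda>i j. c * x i j) \<in> G" using G_iff Hf_iff by blast
  next
    fix x y assume xG: "x \<in> G" and yG: "y \<in> G"
    have xf: "app V (tensor_v (app x e) f) = tensor_v (app x e) f" using xG G_iff Hf_iff by blast
    from yG GX_eq obtain \<xi> where y: "y = Lmap V (omega \<xi> f)" unfolding X_def by blast
    have "comp_op x y = Lmap V (omega (app (Lmap V (omega (app x e) cv)) \<xi>) f)"
    proof (rule op_eq_app)
      fix z
      show "app (comp_op x y) z = app (Lmap V (omega (app (Lmap V (omega (app x e) cv)) \<xi>) f)) z"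
        unfolding app_comp y by (subst G_rep[OF xG]) (rule L_prod[OF xf])
    qed
    then show "comp_op x y \<in> G" using GX_eq unfolding X_def by blast
  next
    fix x assume "x \<in> G" then show "adj x \<in> G" by (rule G_adj)
  qed
  have CO: "delta V ` G \<subseteq> alg_tensor (Salg V) G"
  proof
    fix T assume "T \<in> delta V ` G"
    then obtain x where xG: "x \<in> G" and T: "T = delta V x" by blast
    define \<eta> where "\<eta> = app x e"
    have \<eta>f: "app V (tensor_v \<eta> f) = tensor_v \<eta> f" using xG unfolding G_iff Hf_iff \<eta>_def by blast
    have x: "x = Lmap V (omega cv \<eta>)" unfolding \<eta>_def by (rule G_rep[OF xG])
    obtain xs where xs: "set xs = (UNIV::'i set)" "distinct xs"
      using finite_distinct_list[OF finite_UNIV] by blast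
    define A where "A k = Lmap V (omega cv (bv (xs ! k)))" for k
    define B where "B k = Lmap V (omega (bv (xs ! k)) \<eta>)" for k
    have AB: "\<forall>k<length xs. A k \<in> Salg V \<and> B k \<in> G"
    proof (intro allI impI conjI)
      fix k show "A k \<in> Salg V" unfolding A_def by (rule Salg_L)
      show "B k \<in> G" unfolding G_iff Hf_iff B_def using Salg_L Le_fix[OF \<eta>f] by blast
    qed
    have Teq: "T = (\<lambda>p q. \<Sum>k<length xs. (\<lambda>_. 1) k * tensor_op (A k) (B k) p q)"
    proof (rule op_eq_tensor, rule vec_eq_tensor)
      fix a b y1 y2 :: "'i vec"
      have "inner_v (tensor_v y1 y2) (app T (tensor_v a b))
         = inner_v (tensor_v cv (tensor_v y1 y2)) (app (leg12 V) (app (leg13 V) (tensor_v \<eta> (tensor_v a b))))"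
        unfolding T x by (rule delta_formula)
      also have "\<dots> = (\<Sum>m\<in>UNIV. inner_v (tensor_v cv y1) (app V (tensor_v (bv m) a)) * inner_v (tensor_v (bv m) y2) (app V (tensor_v \<eta> b)))"
        by (rule resol)
      also have "\<dots> = (\<Sum>k<length xs. inner_v (tensor_v cv y1) (app V (tensor_v (bv (xs!k)) a)) * inner_v (tensor_v (bv (xs!k)) y2) (app V (tensor_v \<eta> b)))"
        by (rule sum_list_reindex[OF xs(2) xs(1), symmetric])
      also have "\<dots> = inner_v (tensor_v y1 y2) (app (\<lambda>p q. \<Sum>k<length xs. (\<lambda>_. 1) k * tensor_op (A k) (B k) p q) (tensor_v a b))"
        by (simp add: app_opsum1 app_tensor inner_sum_r1 inner_tensor A_def B_def inner_Lmap)
      finally show "inner_v (tensor_v y1 y2) (app T (tensor_v a b)) = inner_v (tensor_v y1 y2) (app (\<lambda>p q. \<Sum>k<length xs. (\<lambda>_. 1) k * tensor_op (A k) (B k) p q) (tensor_v a b))" .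
    qed
    have "\<exists>(n::nat) c a b. (\<forall>k<n. a k \<in> Salg V \<and> b k \<in> G) \<and> T = (\<lambda>p q. \<Sum>k<n. c k * tensor_op (a k) (b k) p q)"
      apply (rule_tac x="length xs" in exI)
      apply (rule_tac x="\<lambda>_::nat. 1::complex" in exI)
      apply (rule_tac x=A in exI)
      apply (rule_tac x=B in exI)
      using AB Teq by simp
    then show "T \<in> alg_tensor (Salg V) G"
      unfolding alg_tensor_def by simp
  qed
  have GS: "G \<subseteq> Salg V" using G_iff by blast
  have r1: "G_f V e f = {adj (Lmap V (omega \<xi> f)) | \<xi>. True}" using GY unfolding G_def Y_def .
  have r2: "G_f V e f = {x \<in> Salg V. comp_op x (rho_f V f) = comp_op (rho_f V f) x}"
    using C2 unfolding G_def R_def .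
  have r3: "G_f V e f = {x \<in> Salg V. comp_op (delta V x) (tensor_op id_op (L_f V f)) = tensor_op x (L_f V f)}"
    using C3 unfolding G_def Lf_def .
  have r4: "G_f V e f \<subseteq> Salg V" using GS unfolding G_def .
  have r5: "star_subalgebra (G_f V e f)" using SA unfolding G_def .
  have r6: "delta V ` G_f V e f \<subseteq> alg_tensor (Salg V) (G_f V e f)" using CO unfolding G_def .
  show ?thesis using r1 r2 r3 r4 r5 r6 by (intro conjI)
qed


end
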